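(* Let $(E,\|\cdot\|_E)$ be a fully symmetric sequence space with $E\neq l_\infty$, and let $T$ be a Dunford–Schwartz operator on $l_\infty$. Then for every $x\in E$ there exists $\widehat{x}\in E$ such that $$\Big\|\frac1n\sum_{k=0}^{n-1}T^k(x)-\widehat{x}\Big\|_\infty\to 0 \quad (n\to\infty).$$
   Context: $l_\infty$ is the Banach lattice of bounded real sequences $x=\{(x)_n\}_{n\ge1}$ with $\|x\|_\infty=\sup_n|(x)_n|$; $c_0$ is the subspace of sequences converging to $0$; $l_1$ is the space of absolutely summable sequences with $\|x\|_1=\sum_n|(x)_n|$. A linear operator $T:l_\infty\to l_\infty$ is a Dunford–Schwartz operator if $\|T(x)\|_1\le\|x\|_1$ for all $x\in l_1$ and $\|T(x)\|_\infty\le\|x\|_\infty$ for all $x\in l_\infty$. For $x\in l_\infty$, its non-increasing rearrangement is the sequence $x^*=\{(x^* )_n\}$ with $(x^* )_n=\inf\{\sup_{m\notin F}|(x)_m| : F\subset\mathbb N \text{ finite}, \operatorname{card}(F)<n\}$. A symmetric sequence space is a nonzero linear subspace $E\subset l_\infty$ with a Banach norm $\|\cdot\|_E$ such that $y\in E$, $x\in l_\infty$, $x^*\le y^*$ imply $x\in E$ and $\|x\|_E\le\|y\|_E$ (normalized so that $\|\{1,0,0,\dots\}\|_E=1$). Write $x\prec y$ if $\sum_{n=1}^k(x^* )_n\le\sum_{n=1}^k(y^* )_n$ for all $k\in\mathbb N$. A symmetric sequence space $E$ is fully symmetric if $x\in l_\infty$, $y\in E$, $x\prec y$ imply $x\in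 E$ and $\|x\|_E\le\|y\|_E$. *)

theory Defs
  imports "HOL-Analysis.Analysis"
begin

type_synonym seq = "nat \<Rightarrow> real"

definition linf :: "seq set" where
  "linf = {x. bounded (range x)}"

definition sup_norm :: "seq \<Rightarrow> real" where
  "sup_norm x = (SUP n. \<bar>x n\<bar>)"

definition l1 :: "seq set" where
  "l1 = {x. summable (\<lambda>n. \<bar>x n\<bar>)}"

definition l1_norm :: "seq \<Rightarrow> real" where
  "l1_norm x = (\<Sum>n. \<bar>x n\<bar>)"

definition dunford_schwartz :: "(seq \<Rightarrow> seq) \<Rightarrow> bool" where
  "dunford_schwartz T \<longleftrightarrow>
     (\<forall>x\<in>linf. T x \<in> linf) \<and>
     (\<forall>x\<in>linf. \<forall>y\<in>linf. T (\<lambda>i. x i + y i) = (\<lambda>i. T x i + T y i)) \<and>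
     (\<forall>x\<in>linf. \<forall>c::real. T (\<lambda>i. c * x i) = (\<lambda>i. c * T x i)) \<and>
     (\<forall>x\<in>l1. T x \<in> l1 \<and> l1_norm (T x) \<le> l1_norm x) \<and>
     (\<forall>x\<in>linf. sup_norm (T x) \<le> sup_norm x)"

text \<open>Non-increasing rearrangement, 0-indexed: entry k corresponds to the paper's
  entry n = k+1, so the finite sets F range over card F < k+1, i.e. card F \<le> k.\<close>
definition rearr :: "seq \<Rightarrow> seq" where
  "rearr x k = Inf {(SUP m\<in>- F. \<bar>x m\<bar>) | F. finite F \<and> card F \<le> k}"

definition majorized :: "seq \<Rightarrow> seq \<Rightarrow> bool" where
  "majorized x y \<longleftrightarrow> (\<forall>k. (\<Sum>i\<le>k. rearr x i) \<le> (\<Sum>i\<le>k. rearr y i))"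

definition symmetric_seq_space :: "seq set \<Rightarrow> (seq \<Rightarrow> real) \<Rightarrow> bool" where
  "symmetric_seq_space E N \<longleftrightarrow>
     E \<subseteq> linf \<and> E \<noteq> {(\<lambda>_. 0)} \<and>
     (\<lambda>_. 0) \<in> E \<and>
     (\<forall>x\<in>E. \<forall>y\<in>E. (\<lambda>i. x i + y i) \<in> E) \<and>
     (\<forall>x\<in>E. \<forall>c::real. (\<lambda>i. c * x i) \<in> E) \<and>
     (\<forall>x\<in>E. N x \<ge> 0 \<and> (N x = 0 \<longleftrightarrow> x = (\<lambda>_. 0))) \<and>
     (\<forall>x\<in>E. \<forall>y\<in>E. N (\<lambda>i. x i + y i) \<le> N x + N y) \<and>
     (\<forall>x\<in>E. \<forall>c::real. N (\<lambda>i. c * x i) = \<bar>c\<bar> * N x) \<and>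
     (\<forall>X::nat \<Rightarrow> seq. (\<forall>k. X k \<in> E) \<and>
        (\<forall>e>0. \<exists>M. \<forall>m\<ge>M. \<forall>n\<ge>M. N (\<lambda>i. X m i - X n i) < e) \<longrightarrow>
        (\<exists>x\<in>E. (\<lambda>k. N (\<lambda>i. X k i - x i)) \<longlonglongrightarrow> 0)) \<and>
     (\<forall>y\<in>E. \<forall>x\<in>linf. (\<forall>k. rearr x k \<le> rearr y k) \<longrightarrow> x \<in> E \<and> N x \<le> N y) \<and>
     N (\<lambda>n. if n = 0 then 1 else 0) = 1"

definition fully_symmetric :: "seq set \<Rightarrow> (seq \<Rightarrow> real) \<Rightarrow> bool" where
  "fully_symmetric E N \<longleftrightarrow> symmetric_seq_space E N \<and>
     (\<forall>y\<in>E. \<forall>x\<in>linf. majorized x y \<longrightarrow> x \<in> E \<and> N x \<le> N y)"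

end

theory Submission
  imports Defs
begin


lemma linf_iff: "x \<in> linf \<longleftrightarrow> (\<exists>B. \<forall>i. \<bar>x i\<bar> \<le> B)"
  unfolding linf_def bounded_iff by auto

lemma linfI: "(\<And>i. \<bar>x i\<bar> \<le> B) \<Longrightarrow> x \<in> linf"
  unfolding linf_iff by blast

lemma sup_norm_ge: "x \<in> linf \<Longrightarrow> \<bar>x i\<bar> \<le> sup_norm x"
proof -
  assume "x \<in> linf"
  then obtain B where B: "\<And>i. \<bar>x i\<bar> \<le> B" unfolding linf_iff by blast
  have "bdd_above (range (\<lambda>i. \<bar>x i\<bar>))" using B by (auto intro!: bdd_aboveI)
  then show ?thesis unfolding sup_norm_def by (rule cSUP_upper[rotated]) auto
qed

lemma sup_norm_le: "(\<And>i. \<bar>x i\<bar> \<le> B) \<Longrightarrow> sup_norm x \<le> B"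
  unfolding sup_norm_def by (rule cSUP_least) auto

lemma sup_norm_nonneg: "x \<in> linf \<Longrightarrow> 0 \<le> sup_norm x"
  using sup_norm_ge[of x 0] by linarith

lemma linf_add: "x \<in> linf \<Longrightarrow> y \<in> linf \<Longrightarrow> (\<lambda>i. x i + y i) \<in> linf"
  by (rule linfI[of _ "sup_norm x + sup_norm y"])
     (rule order_trans[OF abs_triangle_ineq], simp add: add_mono sup_norm_ge)

lemma linf_scale: "x \<in> linf \<Longrightarrow> (\<lambda>i. c * x i) \<in> linf"
  by (rule linfI[of _ "\<bar>c\<bar> * sup_norm x"])
     (simp add: abs_mult mult_left_mono sup_norm_ge)

lemma linf_minus: "x \<in> linf \<Longrightarrow> y \<in> linf \<Longrightarrow> (\<lambda>i. x i - y i) \<in> linf"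
  by (rule linfI[of _ "sup_norm x + sup_norm y"])
     (rule order_trans[OF abs_triangle_ineq4], simp add: add_mono sup_norm_ge)

lemma linf_zero: "(\<lambda>i. 0) \<in> linf"
  by (rule linfI[of _ 0]) simp

lemma linf_sum: "finite J \<Longrightarrow> (\<And>j. j \<in> J \<Longrightarrow> f j \<in> linf) \<Longrightarrow> (\<lambda>i. \<Sum>j\<in>J. f j i) \<in> linf"
  by (induction J rule: finite_induct) (auto simp: linf_zero intro!: linf_add)

lemma sup_norm_add: "x \<in> linf \<Longrightarrow> y \<in> linf \<Longrightarrow> sup_norm (\<lambda>i. x i + y i) \<le> sup_norm x + sup_norm y"
  by (rule sup_norm_le) (rule order_trans[OF abs_triangle_ineq], simp add: add_mono sup_norm_ge)

lemma sup_norm_scale: "x \<in> linf \<Longrightarrow> sup_norm (\<lambda>i. c * x i) \<le> \<bar>c\<bar> * sup_norm x"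
  by (rule sup_norm_le) (simp add: abs_mult mult_left_mono sup_norm_ge)

lemma l1_abs_le: "x \<in> l1 \<Longrightarrow> \<bar>x i\<bar> \<le> l1_norm x"
  unfolding l1_def l1_norm_def
  using sum_le_suminf[of "\<lambda>n. \<bar>x n\<bar>" "{i}"] by auto

lemma l1_norm_nonneg: "x \<in> l1 \<Longrightarrow> 0 \<le> l1_norm x"
  unfolding l1_norm_def l1_def by (auto intro: suminf_nonneg)

lemma l1_linf: "x \<in> l1 \<Longrightarrow> x \<in> linf"
  using l1_abs_le linfI by blast

lemma l1_add: "x \<in> l1 \<Longrightarrow> y \<in> l1 \<Longrightarrow> (\<lambda>i. x i + y i) \<in> l1 \<and> l1_norm (\<lambda>i. x i + y i) \<le> l1_norm x + l1_norm y"
proof -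
  assume a: "x \<in> l1" "y \<in> l1"
  then have s: "summable (\<lambda>n. \<bar>x n\<bar> + \<bar>y n\<bar>)" unfolding l1_def by (intro summable_add) auto
  have s2: "summable (\<lambda>n. \<bar>x n + y n\<bar>)"
    by (rule summable_comparison_test'[OF s]) auto
  have "(\<Sum>n. \<bar>x n + y n\<bar>) \<le> (\<Sum>n. \<bar>x n\<bar> + \<bar>y n\<bar>)"
    by (rule suminf_le[OF _ s2 s]) auto
  also have "\<dots> = l1_norm x + l1_norm y" using a unfolding l1_def l1_norm_def by (simp add: suminf_add)
  finally show ?thesis using s2 unfolding l1_def l1_norm_def by auto
qed

lemma l1_scale: "x \<in> l1 \<Longrightarrow> (\<lambda>i. c * x i) \<in> l1 \<and> l1_norm (\<lambda>i. c * x i) = \<bar>c\<bar> * l1_norm x"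
  unfolding l1_def l1_norm_def by (auto simp: abs_mult intro: summable_mult suminf_mult)

lemma l1_zero: "(\<lambda>i. 0) \<in> l1 \<and> l1_norm (\<lambda>i. 0) = 0"
  unfolding l1_def l1_norm_def by auto

lemma l1_minus: "x \<in> l1 \<Longrightarrow> y \<in> l1 \<Longrightarrow> (\<lambda>i. x i - y i) \<in> l1 \<and> l1_norm (\<lambda>i. x i - y i) \<le> l1_norm x + l1_norm y"
  using l1_add[of x "\<lambda>i. (-1) * y i"] l1_scale[of y "-1"] by simp

lemma l1_sum: "finite J \<Longrightarrow> (\<And>j. j \<in> J \<Longrightarrow> f j \<in> l1) \<Longrightarrow>
   (\<lambda>i. \<Sum>j\<in>J. f j i) \<in> l1 \<and> l1_norm (\<lambda>i. \<Sum>j\<in>J. f j i) \<le> (\<Sum>j\<in>J. l1_norm (f j))"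
proof (induction J rule: finite_induct)
  case empty then show ?case using l1_zero by simp
next
  case (insert a J)
  then show ?case using l1_add[of "f a" "\<lambda>i. \<Sum>j\<in>J. f j i"] by auto
qed

lemma l1_finite_support: "finite {i. x i \<noteq> 0} \<Longrightarrow> x \<in> l1 \<and> l1_norm x = (\<Sum>i\<in>{i. x i \<noteq> 0}. \<bar>x i\<bar>)"
proof -
  assume f: "finite {i. x i \<noteq> 0}"
  have "(\<lambda>n. \<bar>x n\<bar>) sums (\<Sum>i\<in>{i. x i \<noteq> 0}. \<bar>x i\<bar>)"
    by (rule sums_finite[OF f]) auto
  then show ?thesis unfolding l1_def l1_norm_def by (auto simp: sums_iff)
qed

lemma l1_sum_le: "u \<in> l1 \<Longrightarrow> finite S \<Longrightarrow> (\<Sum>m\<in>S. \<bar>u m\<bar>) \<le> l1_norm u"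
  unfolding l1_def l1_norm_def by (auto intro!: sum_le_suminf)



lemma sup_on_bdd: "x \<in> linf \<Longrightarrow> bdd_above ((\<lambda>m. \<bar>x m\<bar>) ` A)"
  using sup_norm_ge[of x] by (auto intro!: bdd_aboveI)

lemma sup_on_ge: "x \<in> linf \<Longrightarrow> m \<notin> F \<Longrightarrow> \<bar>x m\<bar> \<le> (SUP m\<in>- F. \<bar>x m\<bar>)"
  by (rule cSUP_upper[OF _ sup_on_bdd]) auto

lemma compl_finite_ne: "finite (F::nat set) \<Longrightarrow> \<exists>m. m \<notin> F"
  using ex_new_if_finite[OF infinite_UNIV_nat] by blast

definition Rset :: "seq \<Rightarrow> nat \<Rightarrow> real set" where
  "Rset x k = {(SUP m\<in>- F. \<bar>x m\<bar>) | F. finite F \<and> card F \<le> k}"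

lemma rearr_Rset: "rearr x k = Inf (Rset x k)"
  unfolding rearr_def Rset_def by simp

lemma Rset_nonneg: "x \<in> linf \<Longrightarrow> r \<in> Rset x k \<Longrightarrow> 0 \<le> r"
  unfolding Rset_def
proof clarify
  fix F :: "nat set" assume "x \<in> linf" "finite F"
  then obtain m where "m \<notin> F" using compl_finite_ne by blast
  then show "0 \<le> (SUP m\<in>- F. \<bar>x m\<bar>)" using sup_on_ge[OF \<open>x \<in> linf\<close>, of m F] by linarith
qed

lemma Rset_ne: "Rset x k \<noteq> {}"
  unfolding Rset_def by (auto intro!: exI[of _ "{}"])

lemma Rset_bdd: "x \<in> linf \<Longrightarrow> bdd_below (Rset x k)"
  using Rset_nonneg by (auto intro!: bdd_belowI[of _ 0])

lemma rearr_nonneg: "x \<in> linf \<Longrightarrow> 0 \<le> rearr x k"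
  unfolding rearr_Rset by (rule cInf_greatest[OF Rset_ne]) (rule Rset_nonneg)

lemma rearr_le_Sup: "x \<in> linf \<Longrightarrow> finite F \<Longrightarrow> card F \<le> k \<Longrightarrow> rearr x k \<le> (SUP m\<in>- F. \<bar>x m\<bar>)"
  unfolding rearr_Rset by (rule cInf_lower[OF _ Rset_bdd]) (auto simp: Rset_def)

lemma rearr_le_sup_norm: "x \<in> linf \<Longrightarrow> rearr x k \<le> sup_norm x"
  using rearr_le_Sup[of x "{}" k] by (simp add: sup_norm_def)

lemma Rset_mono: "i \<le> k \<Longrightarrow> Rset x i \<subseteq> Rset x k"
  unfolding Rset_def
proof clarify
  fix F :: "nat set" assume "i \<le> k" "finite F" "card F \<le> i"
  then show "\<exists>F'. (SUP m\<in>- F. \<bar>x m\<bar>) = (SUP m\<in>- F'. \<bar>x m\<bar>) \<and> finite F' \<and> card F' \<le> k"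
    by (intro exI[of _ F]) simp
qed

lemma rearr_mono: "x \<in> linf \<Longrightarrow> i \<le> k \<Longrightarrow> rearr x k \<le> rearr x i"
  unfolding rearr_Rset
  by (rule cInf_superset_mono[OF Rset_ne Rset_bdd Rset_mono])

lemma rearr_geI:
  assumes "x \<in> linf" "finite G" "k < card G" "\<And>i. i \<in> G \<Longrightarrow> s \<le> \<bar>x i\<bar>"
  shows "s \<le> rearr x k"
  unfolding rearr_Rset
proof (rule cInf_greatest[OF Rset_ne])
  fix r assume "r \<in> Rset x k"
  then obtain F where F: "finite F" "card F \<le> k" "r = (SUP m\<in>- F. \<bar>x m\<bar>)" unfolding Rset_def by auto
  have "\<not> G \<subseteq> F"
  proof
    assume "G \<subseteq> F"
    then have "card G \<le> card F" by (rule card_mono[OF F(1)])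
    then show False using F(2) assms(3) by linarith
  qed
  then obtain m where m: "m \<in> G" "m \<notin> F" by blast
  show "s \<le> r" using assms(4)[OF m(1)] sup_on_ge[OF assms(1) m(2)] F(3) by linarith
qed

lemma rearr_geI_inf:
  assumes "x \<in> linf" "infinite {i. s \<le> \<bar>x i\<bar>}"
  shows "s \<le> rearr x k"
proof -
  obtain G where "G \<subseteq> {i. s \<le> \<bar>x i\<bar>}" "finite G" "card G = Suc k"
    using infinite_arbitrarily_large[OF assms(2)] by blast
  then show ?thesis by (intro rearr_geI[OF assms(1), of G]) auto
qed

lemma c0_finite: "((x::seq) \<longlonglongrightarrow> 0) \<Longrightarrow> 0 < s \<Longrightarrow> finite {i. s \<le> \<bar>x i\<bar>}"
proof -
  assume "x \<longlonglongrightarrow> 0" "0 < s"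
  then obtain N where N: "\<forall>n\<ge>N. norm (x n - 0) < s" unfolding LIMSEQ_iff by blast
  have "{i. s \<le> \<bar>x i\<bar>} \<subseteq> {..<N}"
  proof
    fix i assume "i \<in> {i. s \<le> \<bar>x i\<bar>}"
    then have "\<not> norm (x i - 0) < s" by simp
    then show "i \<in> {..<N}" using N by (metis lessThan_iff not_le)
  qed
  then show ?thesis by (rule finite_subset) simp
qed

lemma c0_linf: "((x::seq) \<longlonglongrightarrow> 0) \<Longrightarrow> x \<in> linf"
  unfolding linf_def using convergent_imp_Bseq[OF convergentI] Bseq_eq_bounded by blast

lemma rearr_card:
  assumes c0: "x \<longlonglongrightarrow> 0" and s: "0 < s" "s \<le> rearr x k"
  shows "k < card {i. s \<le> \<bar>x i\<bar>}"
proof (rule ccontr)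
  define F where "F = {i. s \<le> \<bar>x i\<bar>}"
  assume "\<not> k < card {i. s \<le> \<bar>x i\<bar>}"
  then have cF: "card F \<le> k" unfolding F_def by simp
  have fF: "finite F" unfolding F_def by (rule c0_finite[OF c0 s(1)])
  have xl: "x \<in> linf" by (rule c0_linf[OF c0])
  define G where "G = {i. s/2 \<le> \<bar>x i\<bar>}"
  have fG: "finite G" unfolding G_def by (rule c0_finite[OF c0]) (use s in auto)
  define M where "M = Max (insert (s/2) ((\<lambda>i. \<bar>x i\<bar>) ` (G - F)))"
  have fin: "finite (insert (s/2) ((\<lambda>i. \<bar>x i\<bar>) ` (G - F)))" using fG by auto
  have "M \<in> insert (s/2) ((\<lambda>i. \<bar>x i\<bar>) ` (G - F))" unfolding M_def
    by (rule Max_in[OF fin]) simp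
  then have Ms: "M < s"
  proof (rule insertE)
    assume "M = s/2" then show ?thesis using s(1) by simp
  next
    assume "M \<in> (\<lambda>i. \<bar>x i\<bar>) ` (G - F)"
    then obtain i where "i \<notin> F" "M = \<bar>x i\<bar>" by blast
    then show ?thesis unfolding F_def by simp
  qed
  have "(SUP m\<in>- F. \<bar>x m\<bar>) \<le> M"
  proof (rule cSUP_least)
    show "- F \<noteq> {}" using compl_finite_ne[OF fF] by auto
    fix m assume "m \<in> - F"
    show "\<bar>x m\<bar> \<le> M"
    proof (cases "m \<in> G")
      case True
      then have "\<bar>x m\<bar> \<in> insert (s/2) ((\<lambda>i. \<bar>x i\<bar>) ` (G - F))" using \<open>m \<in> - F\<close> by blast
      from Max_ge[OF fin this] show ?thesis unfolding M_def .
    next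
      case False
      then have "\<bar>x m\<bar> < s/2" unfolding G_def by auto
      moreover have "s/2 \<le> M" unfolding M_def by (rule Max_ge[OF fin]) simp
      ultimately show ?thesis by simp
    qed
  qed
  then show False using rearr_le_Sup[OF xl fF cF] s(2) Ms by linarith
qed



lemma comb_upper:
  fixes r g :: "nat \<Rightarrow> real"
  assumes "finite S" "\<forall>i<j. i < card {m\<in>S. r i \<le> g m}" "\<forall>m\<in>S. 0 \<le> g m"
  shows "(\<Sum>i<j. r i) \<le> (\<Sum>m\<in>S. g m)"
  using assms(2,3)
proof (induction j arbitrary: r g)
  case 0
  then show ?case by (simp add: sum_nonneg)
next
  case (Suc j)
  have "0 < card {m\<in>S. r 0 \<le> g m}" using Suc.prems by auto
  then obtain a where a: "a \<in> S" "r 0 \<le> g a" by (metis (mono_tags, lifting) card_gt_0_iff empty_Collect_eq)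
  define g' where "g' = g(a := 0)"
  have "\<forall>i<j. i < card {m\<in>S. r (Suc i) \<le> g' m}"
  proof (intro allI impI)
    fix i assume "i < j"
    then have c: "Suc i < card {m\<in>S. r (Suc i) \<le> g m}" using Suc.prems by auto
    have sub: "{m\<in>S. r (Suc i) \<le> g m} - {a} \<subseteq> {m\<in>S. r (Suc i) \<le> g' m}" unfolding g'_def by auto
    have "card ({m\<in>S. r (Suc i) \<le> g m} - {a}) \<le> card {m\<in>S. r (Suc i) \<le> g' m}"
      by (rule card_mono[OF _ sub]) (use assms(1) in auto)
    moreover have "card {m\<in>S. r (Suc i) \<le> g m} \<le> Suc (card ({m\<in>S. r (Suc i) \<le> g m} - {a}))"
      using assms(1) by (simp add: card_Diff_singleton_if) linarith
    ultimately show "i < card {m\<in>S. r (Suc i) \<le> g' m}" using c by linarith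
  qed
  moreover have "\<forall>m\<in>S. 0 \<le> g' m" using Suc.prems(2) unfolding g'_def by auto
  ultimately have IH: "(\<Sum>i<j. r (Suc i)) \<le> (\<Sum>m\<in>S. g' m)" by (rule Suc.IH)
  have e1: "(\<Sum>i<Suc j. r i) = r 0 + (\<Sum>i<j. r (Suc i))" by (rule sum.lessThan_Suc_shift)
  have e2: "(\<Sum>m\<in>S. g m) = g a + (\<Sum>m\<in>S - {a}. g m)" by (rule sum.remove[OF assms(1) a(1)])
  have e3: "(\<Sum>m\<in>S. g' m) = g' a + (\<Sum>m\<in>S - {a}. g' m)" by (rule sum.remove[OF assms(1) a(1)])
  have e4: "(\<Sum>m\<in>S - {a}. g' m) = (\<Sum>m\<in>S - {a}. g m)" unfolding g'_def by (rule sum.cong) auto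
  show ?case using e1 e2 e3 e4 IH a(2) unfolding g'_def by simp
qed

lemma comb_lower:
  fixes r h :: "nat \<Rightarrow> real"
  assumes "finite P" "\<And>i s. i < card {m\<in>P. s \<le> h m} \<Longrightarrow> s \<le> r i"
  shows "(\<Sum>m\<in>P. h m) \<le> (\<Sum>i<card P. r i)"
  using assms
proof (induction "card P" arbitrary: P r)
  case 0
  then show ?case by simp
next
  case (Suc n)
  then have ne: "P \<noteq> {}" by auto
  define a where "a = (SOME a. a \<in> P \<and> (\<forall>m\<in>P. h m \<le> h a))"
  have "\<exists>a. a \<in> P \<and> (\<forall>m\<in>P. h m \<le> h a)"
  proof -
    have "Max (h ` P) \<in> h ` P" using Suc.prems(1) ne by (intro Max_in) auto
    then obtain a where "a \<in> P" "h a = Max (h ` P)" by auto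
    moreover have "\<forall>m\<in>P. h m \<le> Max (h ` P)" using Suc.prems(1) by auto
    ultimately show ?thesis by metis
  qed
  from someI_ex[OF this] have a: "a \<in> P" "\<forall>m\<in>P. h m \<le> h a" unfolding a_def by blast+
  define P' where "P' = P - {a}"
  have cP': "n = card P'" unfolding P'_def using Suc.hyps(2) a(1) Suc.prems(1) by simp
  have fP': "finite P'" unfolding P'_def using Suc.prems(1) by simp
  have H': "s \<le> r (Suc i)" if "i < card {m\<in>P'. s \<le> h m}" for i s
  proof -
    from that obtain m where "m \<in> P'" "s \<le> h m" by (metis (mono_tags, lifting) card.empty empty_Collect_eq not_less0)
    then have "s \<le> h a" using a(2) unfolding P'_def by force
    then have "{m\<in>P. s \<le> h m} = insert a {m\<in>P'. s \<le> h m}" unfolding P'_def using a(1) by auto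
    moreover have "a \<notin> {m\<in>P'. s \<le> h m}" unfolding P'_def by auto
    moreover have "finite {m\<in>P'. s \<le> h m}" using fP' by auto
    ultimately have "card {m\<in>P. s \<le> h m} = Suc (card {m\<in>P'. s \<le> h m})" by simp
    then have "Suc i < card {m\<in>P. s \<le> h m}" using that by simp
    then show ?thesis by (rule Suc.prems(2))
  qed
  have IH: "(\<Sum>m\<in>P'. h m) \<le> (\<Sum>i<card P'. r (Suc i))"
    by (rule Suc.hyps(1)[OF cP' fP']) (rule H')
  have r0: "h a \<le> r 0"
  proof (rule Suc.prems(2))
    have "a \<in> {m\<in>P. h a \<le> h m}" using a(1) by simp
    then show "0 < card {m\<in>P. h a \<le> h m}" using Suc.prems(1) by (metis (no_types, lifting) card_gt_0_iff empty_iff finite_subset mem_Collect_eq subsetI)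
  qed
  have "(\<Sum>m\<in>P. h m) = h a + (\<Sum>m\<in>P'. h m)" unfolding P'_def by (rule sum.remove[OF Suc.prems(1) a(1)])
  also have "\<dots> \<le> r 0 + (\<Sum>i<n. r (Suc i))" using IH r0 cP' by simp
  also have "\<dots> = (\<Sum>i<Suc n. r i)" by (rule sum.lessThan_Suc_shift[symmetric])
  finally show ?case using Suc.hyps(2) by simp
qed




lemma rearr_sum_upper:
  fixes z u :: seq
  assumes c0: "z \<longlonglongrightarrow> 0" and u: "u \<in> l1" and zu: "\<And>m. \<bar>z m - u m\<bar> \<le> t" and t: "0 < t"
  shows "(\<Sum>i\<le>k. rearr z i) \<le> real (Suc k) * t + l1_norm u"
proof -
  define S where "S = {m. t \<le> \<bar>z m\<bar>} \<union> {..k}"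
  have fS: "finite S" unfolding S_def using c0_finite[OF c0 t] by simp
  define g where "g m = max (\<bar>z m\<bar> - t) 0" for m
  define r where "r i = max (rearr z i - t) 0" for i
  have hyp: "\<forall>i<Suc k. i < card {m\<in>S. r i \<le> g m}"
  proof (intro allI impI)
    fix i assume i: "i < Suc k"
    show "i < card {m\<in>S. r i \<le> g m}"
    proof (cases "t < rearr z i")
      case True
      have "{m. rearr z i \<le> \<bar>z m\<bar>} \<subseteq> {m\<in>S. r i \<le> g m}"
        unfolding S_def r_def g_def using True by auto
      then have "card {m. rearr z i \<le> \<bar>z m\<bar>} \<le> card {m\<in>S. r i \<le> g m}"
        by (rule card_mono[rotated]) (use fS in auto)
      moreover have "i < card {m. rearr z i \<le> \<bar>z m\<bar>}"
        by (rule rearr_card[OF c0]) (use True t in auto)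
      ultimately show ?thesis by linarith
    next
      case False
      then have "{m\<in>S. r i \<le> g m} = S" unfolding r_def g_def by auto
      moreover have "card {..k} \<le> card S" unfolding S_def by (rule card_mono) (use fS S_def in auto)
      ultimately show ?thesis using i by simp
    qed
  qed
  have gn: "\<forall>m\<in>S. 0 \<le> g m" unfolding g_def by auto
  have A: "(\<Sum>i<Suc k. r i) \<le> (\<Sum>m\<in>S. g m)" by (rule comb_upper[OF fS hyp gn])
  have B: "(\<Sum>m\<in>S. g m) \<le> (\<Sum>m\<in>S. \<bar>u m\<bar>)"
  proof (rule sum_mono)
    fix m show "g m \<le> \<bar>u m\<bar>" unfolding g_def using zu[of m] t by auto
  qed
  have C: "(\<Sum>i\<le>k. rearr z i) \<le> (\<Sum>i<Suc k. t + r i)"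
    unfolding lessThan_Suc_atMost by (rule sum_mono) (auto simp: r_def)
  have D: "(\<Sum>i<Suc k. t + r i) = real (Suc k) * t + (\<Sum>i<Suc k. r i)"
    by (simp add: sum.distrib)
  show ?thesis using A B C D l1_sum_le[OF u fS] by linarith
qed

lemma rearr_sum_lower:
  fixes x :: seq and k :: nat
  assumes c0: "x \<longlonglongrightarrow> 0"
  defines "t \<equiv> rearr x k"
  defines "u \<equiv> (\<lambda>m. sgn (x m) * max (\<bar>x m\<bar> - t) 0)"
  shows "u \<in> l1 \<and> (\<forall>m. \<bar>x m - u m\<bar> \<le> t) \<and> real (Suc k) * t + l1_norm u \<le> (\<Sum>i\<le>k. rearr x i)"
proof -
  have xl: "x \<in> linf" by (rule c0_linf[OF c0])
  have t0: "0 \<le> t" unfolding t_def by (rule rearr_nonneg[OF xl])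
  define P where "P = {m. t < \<bar>x m\<bar>}"
  have PG: False if G: "G \<subseteq> P" "finite G" "card G = Suc k" for G
  proof -
    have ne: "G \<noteq> {}" using G by auto
    define s where "s = Min ((\<lambda>m. \<bar>x m\<bar>) ` G)"
    have "s \<in> (\<lambda>m. \<bar>x m\<bar>) ` G" unfolding s_def using G ne by (intro Min_in) auto
    then have st: "t < s" using G(1) unfolding P_def by auto
    have "s \<le> rearr x k"
      by (rule rearr_geI[OF xl G(2)]) (use G in \<open>auto simp: s_def\<close>)
    then show False using st t_def by simp
  qed
  have fP: "finite P"
  proof (rule ccontr)
    assume "infinite P"
    then obtain G where "G \<subseteq> P" "finite G" "card G = Suc k" using infinite_arbitrarily_large by blast
    then show False using PG by blast
  qed
  have cP: "card P \<le> k"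
  proof (rule ccontr)
    assume "\<not> card P \<le> k"
    then obtain G where "G \<subseteq> P" "card G = Suc k" using obtain_subset_with_card_n[of "Suc k" P] by auto
    moreover then have "finite G" using fP finite_subset by blast
    ultimately show False using PG by blast
  qed
  have supp: "{m. u m \<noteq> 0} = P" unfolding u_def P_def using t0 by (auto simp: sgn_if)
  have ul1: "u \<in> l1" and un: "l1_norm u = (\<Sum>m\<in>P. \<bar>u m\<bar>)"
    using l1_finite_support[of u] fP supp by auto
  have un2: "(\<Sum>m\<in>P. \<bar>u m\<bar>) = (\<Sum>m\<in>P. \<bar>x m\<bar> - t)"
    using t0 by (intro sum.cong) (auto simp: u_def P_def abs_mult sgn_if)
  have close: "\<forall>m. \<bar>x m - u m\<bar> \<le> t"
  proof
    fix m show "\<bar>x m - u m\<bar> \<le> t"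
    proof (cases "t < \<bar>x m\<bar>")
      case True
      then show ?thesis unfolding u_def using t0 by (cases "x m > 0") (auto simp: sgn_if)
    next
      case False
      then show ?thesis unfolding u_def by auto
    qed
  qed
  have H: "s \<le> rearr x i - t" if "i < card {m\<in>P. s \<le> \<bar>x m\<bar> - t}" for i s
  proof -
    let ?G = "{m\<in>P. s \<le> \<bar>x m\<bar> - t}"
    have "card ?G \<le> card P" by (rule card_mono[OF fP]) auto
    then have ik: "i \<le> k" using that cP by linarith
    show ?thesis
    proof (cases "0 < s")
      case True
      have "s + t \<le> rearr x i"
        by (rule rearr_geI[OF xl _ that]) (use fP in auto)
      then show ?thesis by simp
    next
      case False
      have "rearr x k \<le> rearr x i" by (rule rearr_mono[OF xl ik])
      then show ?thesis using False t_def by simp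
    qed
  qed
  have L: "(\<Sum>m\<in>P. \<bar>x m\<bar> - t) \<le> (\<Sum>i<card P. rearr x i - t)"
    by (rule comb_lower[OF fP]) (rule H)
  have L2: "(\<Sum>i<card P. rearr x i - t) \<le> (\<Sum>i<Suc k. rearr x i - t)"
  proof (rule sum_mono2)
    show "{..<card P} \<subseteq> {..<Suc k}" using cP by auto
    fix i assume "i \<in> {..<Suc k} - {..<card P}"
    then have "i \<le> k" by auto
    then show "0 \<le> rearr x i - t" using rearr_mono[OF xl] t_def by simp
  qed simp
  have L3: "(\<Sum>i<Suc k. rearr x i - t) = (\<Sum>i\<le>k. rearr x i) - real (Suc k) * t"
    unfolding lessThan_Suc_atMost by (simp add: sum_subtractf)
  have "real (Suc k) * t + l1_norm u \<le> (\<Sum>i\<le>k. rearr x i)" using un un2 L L2 L3 by linarith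
  with ul1 close show ?thesis by blast
qed



lemma ds_linf: "dunford_schwartz T \<Longrightarrow> x \<in> linf \<Longrightarrow> T x \<in> linf"
  unfolding dunford_schwartz_def by blast
lemma ds_add: "dunford_schwartz T \<Longrightarrow> x \<in> linf \<Longrightarrow> y \<in> linf \<Longrightarrow> T (\<lambda>i. x i + y i) = (\<lambda>i. T x i + T y i)"
  unfolding dunford_schwartz_def by blast
lemma ds_scale: "dunford_schwartz T \<Longrightarrow> x \<in> linf \<Longrightarrow> T (\<lambda>i. c * x i) = (\<lambda>i. c * T x i)"
  unfolding dunford_schwartz_def by blast
lemma ds_l1: "dunford_schwartz T \<Longrightarrow> x \<in> l1 \<Longrightarrow> T x \<in> l1 \<and> l1_norm (T x) \<le> l1_norm x"
  unfolding dunford_schwartz_def by blast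
lemma ds_sup: "dunford_schwartz T \<Longrightarrow> x \<in> linf \<Longrightarrow> sup_norm (T x) \<le> sup_norm x"
  unfolding dunford_schwartz_def by blast

lemma ds_zero: "dunford_schwartz T \<Longrightarrow> T (\<lambda>i. 0) = (\<lambda>i. 0)"
  using ds_scale[of T "\<lambda>i. 0" 0] linf_zero by simp

lemma ds_minus: "dunford_schwartz T \<Longrightarrow> x \<in> linf \<Longrightarrow> y \<in> linf \<Longrightarrow> T (\<lambda>i. x i - y i) = (\<lambda>i. T x i - T y i)"
  using ds_add[of T x "\<lambda>i. (-1) * y i"] ds_scale[of T y "-1"] linf_scale[of y "-1"] by simp

lemma ds_sum: assumes T: "dunford_schwartz T" shows "finite J \<Longrightarrow> (\<And>j. j \<in> J \<Longrightarrow> f j \<in> linf) \<Longrightarrow>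
  T (\<lambda>i. \<Sum>j\<in>J. f j i) = (\<lambda>i. \<Sum>j\<in>J. T (f j) i)"
proof (induction J rule: finite_induct)
  case empty then show ?case using ds_zero[OF T] by simp
next
  case (insert a J)
  have "T (\<lambda>i. \<Sum>j\<in>insert a J. f j i) = T (\<lambda>i. f a i + (\<Sum>j\<in>J. f j i))"
    using insert by simp
  also have "\<dots> = (\<lambda>i. T (f a) i + T (\<lambda>i. \<Sum>j\<in>J. f j i) i)"
    using insert by (intro ds_add[OF T] linf_sum) auto
  finally show ?case using insert by simp
qed

lemma dsI:
  assumes "\<And>x. x \<in> linf \<Longrightarrow> T x \<in> linf"
    "\<And>x y. x \<in> linf \<Longrightarrow> y \<in> linf \<Longrightarrow> T (\<lambda>i. x i + y i) = (\<lambda>i. T x i + T y i)"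
    "\<And>x c. x \<in> linf \<Longrightarrow> T (\<lambda>i. c * x i) = (\<lambda>i. c * T x i)"
    "\<And>x. x \<in> l1 \<Longrightarrow> T x \<in> l1 \<and> l1_norm (T x) \<le> l1_norm x"
    "\<And>x. x \<in> linf \<Longrightarrow> sup_norm (T x) \<le> sup_norm x"
  shows "dunford_schwartz T"
  unfolding dunford_schwartz_def using assms by blast

lemma ds_id: "dunford_schwartz (\<lambda>x. x)"
  unfolding dunford_schwartz_def by auto

lemma ds_comp: assumes S: "dunford_schwartz S" and T: "dunford_schwartz T"
  shows "dunford_schwartz (\<lambda>x. S (T x))"
proof (rule dsI)
  fix x assume x: "x \<in> linf"
  show "S (T x) \<in> linf" by (intro ds_linf[OF S] ds_linf[OF T x])
  show "sup_norm (S (T x)) \<le> sup_norm x"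
    using ds_sup[OF S ds_linf[OF T x]] ds_sup[OF T x] by linarith
  fix c show "S (T (\<lambda>i. c * x i)) = (\<lambda>i. c * S (T x) i)"
    using ds_scale[OF T x] ds_scale[OF S ds_linf[OF T x]] by simp
next
  fix x y assume x: "x \<in> linf" and y: "y \<in> linf"
  show "S (T (\<lambda>i. x i + y i)) = (\<lambda>i. S (T x) i + S (T y) i)"
    using ds_add[OF T x y] ds_add[OF S ds_linf[OF T x] ds_linf[OF T y]] by simp
next
  fix x assume x: "x \<in> l1"
  show "S (T x) \<in> l1 \<and> l1_norm (S (T x)) \<le> l1_norm x"
    using ds_l1[OF T x] ds_l1[OF S, of "T x"] by auto
qed

lemma ds_pow: "dunford_schwartz T \<Longrightarrow> dunford_schwartz (T ^^ k)"
proof (induction k)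
  case 0 then show ?case using ds_id by (simp add: id_def)
next
  case (Suc k)
  have "T ^^ Suc k = (\<lambda>x. T ((T ^^ k) x))" by (simp add: fun_eq_iff)
  then show ?case using ds_comp[OF Suc.prems Suc.IH[OF Suc.prems]] by simp
qed

lemma abs_sum_le_weights:
  fixes c :: "'a \<Rightarrow> real"
  assumes "finite J" "\<And>j. j \<in> J \<Longrightarrow> 0 \<le> c j" "\<And>j. j \<in> J \<Longrightarrow> \<bar>v j\<bar> \<le> B"
  shows "\<bar>\<Sum>j\<in>J. c j * v j\<bar> \<le> (\<Sum>j\<in>J. c j) * B"
proof -
  have "\<bar>\<Sum>j\<in>J. c j * v j\<bar> \<le> (\<Sum>j\<in>J. \<bar>c j * v j\<bar>)" by (rule sum_abs)
  also have "\<dots> \<le> (\<Sum>j\<in>J. c j * B)"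
    by (rule sum_mono) (simp add: abs_mult assms mult_left_mono)
  finally show ?thesis by (simp add: sum_distrib_right)
qed

lemma ds_comb:
  assumes J: "finite J" and S: "\<And>j. j \<in> J \<Longrightarrow> dunford_schwartz (S j)"
    and l: "\<And>j. j \<in> J \<Longrightarrow> 0 \<le> l j" and sl: "(\<Sum>j\<in>J. l j) \<le> 1"
  shows "dunford_schwartz (\<lambda>x i. \<Sum>j\<in>J. l j * S j x i)"
proof (rule dsI)
  fix x assume x: "x \<in> linf"
  show "(\<lambda>i. \<Sum>j\<in>J. l j * S j x i) \<in> linf"
    by (rule linf_sum[OF J]) (intro linf_scale ds_linf[OF S x])
  fix y assume y: "y \<in> linf"
  show "(\<lambda>i. \<Sum>j\<in>J. l j * S j (\<lambda>i. x i + y i) i) =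
        (\<lambda>i. (\<Sum>j\<in>J. l j * S j x i) + (\<Sum>j\<in>J. l j * S j y i))"
    using ds_add[OF S x y] by (simp add: sum.distrib[symmetric] distrib_left)
next
  fix x c assume x: "x \<in> linf"
  show "(\<lambda>i. \<Sum>j\<in>J. l j * S j (\<lambda>i. c * x i) i) = (\<lambda>i. c * (\<Sum>j\<in>J. l j * S j x i))"
    using ds_scale[OF S x] by (simp add: sum_distrib_left mult.left_commute)
next
  fix x assume x: "x \<in> l1"
  have a: "(\<lambda>i. \<Sum>j\<in>J. l j * S j x i) \<in> l1 \<and>
    l1_norm (\<lambda>i. \<Sum>j\<in>J. l j * S j x i) \<le> (\<Sum>j\<in>J. l1_norm (\<lambda>i. l j * S j x i))"
    by (rule l1_sum[OF J]) (intro l1_scale[THEN conjunct1] ds_l1[OF S x, THEN conjunct1])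
  have "(\<Sum>j\<in>J. l1_norm (\<lambda>i. l j * S j x i)) \<le> (\<Sum>j\<in>J. l j * l1_norm x)"
  proof (rule sum_mono)
    fix j assume j: "j \<in> J"
    have "l1_norm (\<lambda>i. l j * S j x i) = l j * l1_norm (S j x)"
      using l1_scale[OF ds_l1[OF S[OF j] x, THEN conjunct1]] l[OF j] by simp
    also have "\<dots> \<le> l j * l1_norm x" using ds_l1[OF S[OF j] x] l[OF j] by (simp add: mult_left_mono)
    finally show "l1_norm (\<lambda>i. l j * S j x i) \<le> l j * l1_norm x" .
  qed
  also have "\<dots> = (\<Sum>j\<in>J. l j) * l1_norm x" by (simp add: sum_distrib_right)
  also have "\<dots> \<le> l1_norm x" using sl l1_norm_nonneg[OF x] by (simp add: mult_left_le_one_le sum_nonneg l)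
  finally show "(\<lambda>i. \<Sum>j\<in>J. l j * S j x i) \<in> l1 \<and> l1_norm (\<lambda>i. \<Sum>j\<in>J. l j * S j x i) \<le> l1_norm x"
    using a by linarith
next
  fix x assume x: "x \<in> linf"
  show "sup_norm (\<lambda>i. \<Sum>j\<in>J. l j * S j x i) \<le> sup_norm x"
  proof (rule sup_norm_le)
    fix i
    have "\<bar>\<Sum>j\<in>J. l j * S j x i\<bar> \<le> (\<Sum>j\<in>J. l j) * sup_norm x"
    proof (rule abs_sum_le_weights[OF J l])
      fix j assume j: "j \<in> J"
      show "\<bar>S j x i\<bar> \<le> sup_norm x"
        using sup_norm_ge[OF ds_linf[OF S[OF j] x], of i] ds_sup[OF S[OF j] x] by linarith
    qed
    also have "\<dots> \<le> sup_norm x" using sl sup_norm_nonneg[OF x] by (simp add: mult_left_le_one_le sum_nonneg l)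
    finally show "\<bar>\<Sum>j\<in>J. l j * S j x i\<bar> \<le> sup_norm x" .
  qed
qed

definition avg :: "(seq \<Rightarrow> seq) \<Rightarrow> nat \<Rightarrow> seq \<Rightarrow> seq" where
  "avg T n x = (\<lambda>i. \<Sum>k<n. (1 / real n) * (T ^^ k) x i)"

lemma avg_eq: "avg T n x i = (\<Sum>k<n. (T ^^ k) x i) / real n"
  unfolding avg_def by (simp add: sum_divide_distrib)

lemma ds_avg: "dunford_schwartz T \<Longrightarrow> dunford_schwartz (avg T n)"
proof -
  assume T: "dunford_schwartz T"
  have "dunford_schwartz (\<lambda>x i. \<Sum>k<n. (1 / real n) * (T ^^ k) x i)"
    by (rule ds_comb) (auto simp: ds_pow[OF T])
  then show ?thesis unfolding avg_def .
qed



definition sq :: "seq \<Rightarrow> real" where "sq w = (\<Sum>n. (w n)\<^sup>2)"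

lemma l1_sq_summable: "w \<in> l1 \<Longrightarrow> summable (\<lambda>n. (w n)\<^sup>2)"
proof -
  assume w: "w \<in> l1"
  have "summable (\<lambda>n. l1_norm w * \<bar>w n\<bar>)" using w unfolding l1_def by (intro summable_mult) auto
  then show ?thesis
  proof (rule summable_comparison_test')
    fix n
    have "(w n)\<^sup>2 = \<bar>w n\<bar> * \<bar>w n\<bar>" by (simp add: power2_eq_square abs_mult_self_eq)
    also have "\<dots> \<le> l1_norm w * \<bar>w n\<bar>" by (rule mult_right_mono[OF l1_abs_le[OF w]]) simp
    finally show "norm ((w n)\<^sup>2) \<le> l1_norm w * \<bar>w n\<bar>" by simp
  qed
qed

lemma sq_nonneg: "w \<in> l1 \<Longrightarrow> 0 \<le> sq w"
  unfolding sq_def by (intro suminf_nonneg l1_sq_summable) auto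

lemma sq_partial_le: "w \<in> l1 \<Longrightarrow> finite I \<Longrightarrow> (\<Sum>n\<in>I. (w n)\<^sup>2) \<le> sq w"
  unfolding sq_def by (intro sum_le_suminf l1_sq_summable) auto

lemma weighted_cs:
  fixes c w :: "nat \<Rightarrow> real"
  shows "(\<Sum>j\<in>J. c j * w j)\<^sup>2 \<le> (\<Sum>j\<in>J. \<bar>c j\<bar>) * (\<Sum>j\<in>J. \<bar>c j\<bar> * (w j)\<^sup>2)"
proof -
  have "\<bar>\<Sum>j\<in>J. c j * w j\<bar> \<le> (\<Sum>j\<in>J. \<bar>c j * w j\<bar>)" by (rule sum_abs)
  also have "\<dots> = (\<Sum>j\<in>J. sqrt \<bar>c j\<bar> * (sqrt \<bar>c j\<bar> * \<bar>w j\<bar>))"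
    by (rule sum.cong) (auto simp: abs_mult real_sqrt_mult[symmetric])
  finally have a: "\<bar>\<Sum>j\<in>J. c j * w j\<bar> \<le> (\<Sum>j\<in>J. sqrt \<bar>c j\<bar> * (sqrt \<bar>c j\<bar> * \<bar>w j\<bar>))" .
  have "(\<Sum>j\<in>J. c j * w j)\<^sup>2 \<le> (\<Sum>j\<in>J. sqrt \<bar>c j\<bar> * (sqrt \<bar>c j\<bar> * \<bar>w j\<bar>))\<^sup>2"
    using a by (metis abs_ge_zero order.trans power2_abs power_mono)
  also have "\<dots> \<le> (\<Sum>j\<in>J. (sqrt \<bar>c j\<bar>)\<^sup>2) * (\<Sum>j\<in>J. (sqrt \<bar>c j\<bar> * \<bar>w j\<bar>)\<^sup>2)"
    by (rule Cauchy_Schwarz_ineq_sum)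
  also have "\<dots> = (\<Sum>j\<in>J. \<bar>c j\<bar>) * (\<Sum>j\<in>J. \<bar>c j\<bar> * (w j)\<^sup>2)"
    by (simp add: power_mult_distrib)
  finally show ?thesis .
qed

definition ee :: "nat \<Rightarrow> seq" where "ee j = (\<lambda>i. if i = j then 1 else 0)"

lemma ee_l1: "ee j \<in> l1 \<and> l1_norm (ee j) = 1"
proof -
  have "{i. ee j i \<noteq> 0} = {j}" unfolding ee_def by auto
  then show ?thesis using l1_finite_support[of "ee j"] by (simp add: ee_def)
qed

lemma ee_linf: "ee j \<in> linf"
  using ee_l1 l1_linf by blast

context
  fixes T :: "seq \<Rightarrow> seq"
  assumes T: "dunford_schwartz T"
begin

lemma T_trunc: "T (\<lambda>i. if i < N then w i else 0) i = (\<Sum>j<N. w j * T (ee j) i)"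
proof -
  have "(\<lambda>i. if i < N then w i else 0) = (\<lambda>i. \<Sum>j<N. w j * ee j i)"
    by (auto simp: ee_def fun_eq_iff if_distrib sum.delta cong: if_cong)
  then have "T (\<lambda>i. if i < N then w i else 0) = (\<lambda>i. \<Sum>j<N. T (\<lambda>i. w j * ee j i) i)"
    using ds_sum[OF T, of "{..<N}" "\<lambda>j i. w j * ee j i"] linf_scale[OF ee_linf] by simp
  also have "\<dots> = (\<lambda>i. \<Sum>j<N. w j * T (ee j) i)"
    using ds_scale[OF T ee_linf] by simp
  finally show ?thesis by simp
qed

lemma row_bound: "(\<Sum>j<N. \<bar>T (ee j) i\<bar>) \<le> 1"
proof -
  define s where "s = (\<lambda>m. if m < N then sgn (T (ee m) i) else 0)"
  have sb: "\<And>m. \<bar>s m\<bar> \<le> 1" unfolding s_def by (auto simp: sgn_if)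
  then have sl: "s \<in> linf" by (rule linfI)
  have "T s i = (\<Sum>j<N. sgn (T (ee j) i) * T (ee j) i)"
    using T_trunc[of N "\<lambda>m. sgn (T (ee m) i)" i] unfolding s_def .
  also have "\<dots> = (\<Sum>j<N. \<bar>T (ee j) i\<bar>)" by (simp add: sgn_mult_self_eq abs_sgn mult.commute)
  finally have "(\<Sum>j<N. \<bar>T (ee j) i\<bar>) \<le> \<bar>T s i\<bar>" by simp
  also have "\<dots> \<le> sup_norm (T s)" by (rule sup_norm_ge[OF ds_linf[OF T sl]])
  also have "\<dots> \<le> sup_norm s" by (rule ds_sup[OF T sl])
  also have "\<dots> \<le> 1" by (rule sup_norm_le[OF sb])
  finally show ?thesis .
qed

lemma col_bound: "finite I \<Longrightarrow> (\<Sum>i\<in>I. \<bar>T (ee j) i\<bar>) \<le> 1"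
  using l1_sum_le[of "T (ee j)" I] ds_l1[OF T, of "ee j"] ee_l1 by auto

lemma tail_l1: "w \<in> l1 \<Longrightarrow> (\<lambda>m. if m < N then 0 else w m) \<in> l1 \<and>
   l1_norm (\<lambda>m. if m < N then 0 else w m) = l1_norm w - (\<Sum>i<N. \<bar>w i\<bar>)"
proof -
  assume w: "w \<in> l1"
  let ?t = "\<lambda>m. if m < N then 0 else w m"
  have sw: "summable (\<lambda>n. \<bar>w n\<bar>)" using w unfolding l1_def by simp
  have st: "summable (\<lambda>n. \<bar>?t n\<bar>)"
    by (rule summable_comparison_test'[OF sw]) auto
  have "(\<Sum>n. \<bar>?t n\<bar>) = (\<Sum>n. \<bar>?t (n + N)\<bar>) + (\<Sum>i<N. \<bar>?t i\<bar>)"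
    by (rule suminf_split_initial_segment[OF st])
  also have "\<dots> = (\<Sum>n. \<bar>w (n + N)\<bar>)" by simp
  also have "\<dots> = l1_norm w - (\<Sum>i<N. \<bar>w i\<bar>)"
    using suminf_split_initial_segment[OF sw, of N] unfolding l1_norm_def by simp
  finally show ?thesis using st unfolding l1_def l1_norm_def by simp
qed

lemma trunc_conv:
  assumes w: "w \<in> l1"
  shows "(\<lambda>N. T (\<lambda>i. if i < N then w i else 0) i) \<longlonglongrightarrow> T w i"
proof -
  have wl: "w \<in> linf" by (rule l1_linf[OF w])
  have trl: "(\<lambda>i. if i < N then w i else 0) \<in> linf" for N
    by (rule linfI[of _ "sup_norm w"]) (simp add: sup_norm_ge[OF wl] sup_norm_nonneg[OF wl])
  have bound: "\<bar>T w i - T (\<lambda>i. if i < N then w i else 0) i\<bar> \<le> l1_norm w - (\<Sum>i<N. \<bar>w i\<bar>)" for N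
  proof -
    have eq: "(\<lambda>m. w m - (if m < N then w m else 0)) = (\<lambda>m. if m < N then 0 else w m)" by auto
    have "T w i - T (\<lambda>i. if i < N then w i else 0) i = T (\<lambda>m. if m < N then 0 else w m) i"
      using fun_cong[OF ds_minus[OF T wl trl[of N]], of i] eq by simp
    also have "\<bar>\<dots>\<bar> \<le> l1_norm (T (\<lambda>m. if m < N then 0 else w m))"
      by (rule l1_abs_le) (rule ds_l1[OF T tail_l1[OF w, THEN conjunct1], THEN conjunct1])
    also have "\<dots> \<le> l1_norm w - (\<Sum>i<N. \<bar>w i\<bar>)"
      using ds_l1[OF T, of "\<lambda>m. if m < N then 0 else w m"] tail_l1[OF w, of N] by simp
    finally show ?thesis .
  qed
  have sw: "summable (\<lambda>n. \<bar>w n\<bar>)" using w unfolding l1_def by simp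
  have "(\<lambda>N. l1_norm w - (\<Sum>i<N. \<bar>w i\<bar>)) \<longlonglongrightarrow> l1_norm w - l1_norm w"
    unfolding l1_norm_def by (intro tendsto_diff tendsto_const summable_LIMSEQ[OF sw])
  then have lim0: "(\<lambda>N. l1_norm w - (\<Sum>i<N. \<bar>w i\<bar>)) \<longlonglongrightarrow> 0" by simp
  have ev: "eventually (\<lambda>N. norm (T w i - T (\<lambda>i. if i < N then w i else 0) i) \<le> l1_norm w - (\<Sum>i<N. \<bar>w i\<bar>)) sequentially"
    using bound by simp
  have "(\<lambda>N. T w i - T (\<lambda>i. if i < N then w i else 0) i) \<longlonglongrightarrow> 0"
    by (rule Lim_null_comparison[OF ev lim0])
  then have "(\<lambda>N. T w i - (T w i - T (\<lambda>i. if i < N then w i else 0) i)) \<longlonglongrightarrow> T w i - 0"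
    by (intro tendsto_diff tendsto_const)
  then show ?thesis by simp
qed

lemma sq_contract:
  assumes w: "w \<in> l1"
  shows "sq (T w) \<le> sq w"
proof -
  have fin: "(\<Sum>i\<in>I. (T w i)\<^sup>2) \<le> sq w" if I: "finite I" for I
  proof (rule LIMSEQ_le_const2)
    show "(\<lambda>N. \<Sum>i\<in>I. (T (\<lambda>i. if i < N then w i else 0) i)\<^sup>2) \<longlonglongrightarrow> (\<Sum>i\<in>I. (T w i)\<^sup>2)"
      by (intro tendsto_sum tendsto_power trunc_conv[OF w])
    show "\<exists>N0. \<forall>N\<ge>N0. (\<Sum>i\<in>I. (T (\<lambda>i. if i < N then w i else 0) i)\<^sup>2) \<le> sq w"
    proof (intro exI allI impI)
      fix N :: nat
      have "(\<Sum>i\<in>I. (T (\<lambda>i. if i < N then w i else 0) i)\<^sup>2)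
          = (\<Sum>i\<in>I. (\<Sum>j<N. T (ee j) i * w j)\<^sup>2)"
        by (simp add: T_trunc mult.commute)
      also have "\<dots> \<le> (\<Sum>i\<in>I. (\<Sum>j<N. \<bar>T (ee j) i\<bar> * (w j)\<^sup>2))"
      proof (rule sum_mono)
        fix i
        have "(\<Sum>j<N. T (ee j) i * w j)\<^sup>2 \<le> (\<Sum>j<N. \<bar>T (ee j) i\<bar>) * (\<Sum>j<N. \<bar>T (ee j) i\<bar> * (w j)\<^sup>2)"
          by (rule weighted_cs)
        also have "\<dots> \<le> 1 * (\<Sum>j<N. \<bar>T (ee j) i\<bar> * (w j)\<^sup>2)"
          by (rule mult_right_mono[OF row_bound]) (simp add: sum_nonneg)
        finally show "(\<Sum>j<N. T (ee j) i * w j)\<^sup>2 \<le> (\<Sum>j<N. \<bar>T (ee j) i\<bar> * (w j)\<^sup>2)" by simp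
      qed
      also have "\<dots> = (\<Sum>j<N. (w j)\<^sup>2 * (\<Sum>i\<in>I. \<bar>T (ee j) i\<bar>))"
        by (subst sum.swap) (simp add: sum_distrib_left mult.commute)
      also have "\<dots> \<le> (\<Sum>j<N. (w j)\<^sup>2 * 1)"
        by (rule sum_mono, rule mult_left_mono[OF col_bound[OF I]]) simp
      also have "\<dots> \<le> sq w" using sq_partial_le[OF w, of "{..<N}"] by simp
      finally show "(\<Sum>i\<in>I. (T (\<lambda>i. if i < N then w i else 0) i)\<^sup>2) \<le> sq w" .
    qed
  qed
  have "summable (\<lambda>n. (T w n)\<^sup>2)" using ds_l1[OF T w] l1_sq_summable by blast
  then have "(\<Sum>n. (T w n)\<^sup>2) \<le> sq w" by (rule suminf_le_const) (rule fin, simp)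
  then show ?thesis unfolding sq_def .
qed

end


definition nrm :: "seq \<Rightarrow> real" where "nrm w = sqrt (sq w)"

lemma nrm_nonneg: "w \<in> l1 \<Longrightarrow> 0 \<le> nrm w"
  unfolding nrm_def using sq_nonneg by simp

lemma nrm_ge: "w \<in> l1 \<Longrightarrow> \<bar>w i\<bar> \<le> nrm w"
proof -
  assume w: "w \<in> l1"
  have "(w i)\<^sup>2 \<le> sq w" using sq_partial_le[OF w, of "{i}"] by simp
  then have "sqrt ((w i)\<^sup>2) \<le> sqrt (sq w)" by (rule real_sqrt_le_mono)
  then show ?thesis unfolding nrm_def by simp
qed

lemma L2_partial_le: "w \<in> l1 \<Longrightarrow> L2_set w {..<n} \<le> nrm w"
  unfolding L2_set_def nrm_def by (intro real_sqrt_le_mono sq_partial_le) auto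

lemma nrm_add: assumes u: "u \<in> l1" and v: "v \<in> l1"
  shows "nrm (\<lambda>i. u i + v i) \<le> nrm u + nrm v"
proof -
  have uv: "(\<lambda>i. u i + v i) \<in> l1" using l1_add[OF u v] by simp
  have "sq (\<lambda>i. u i + v i) \<le> (nrm u + nrm v)\<^sup>2"
    unfolding sq_def
  proof (rule suminf_le_const[OF l1_sq_summable[OF uv]])
    fix n
    have "(\<Sum>i<n. (u i + v i)\<^sup>2) = (L2_set (\<lambda>i. u i + v i) {..<n})\<^sup>2"
      unfolding L2_set_def by (subst real_sqrt_pow2) (auto intro!: sum_nonneg)
    also have "\<dots> \<le> (L2_set u {..<n} + L2_set v {..<n})\<^sup>2"
      by (rule power_mono[OF L2_set_triangle_ineq L2_set_nonneg])
    also have "\<dots> \<le> (nrm u + nrm v)\<^sup>2"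
      by (rule power_mono[OF add_mono[OF L2_partial_le[OF u] L2_partial_le[OF v]]]) (intro add_nonneg_nonneg L2_set_nonneg)
    finally show "(\<Sum>i<n. (u i + v i)\<^sup>2) \<le> (nrm u + nrm v)\<^sup>2" .
  qed
  then have "sqrt (sq (\<lambda>i. u i + v i)) \<le> sqrt ((nrm u + nrm v)\<^sup>2)" by (rule real_sqrt_le_mono)
  then show ?thesis unfolding nrm_def[of "\<lambda>i. u i + v i"] using nrm_nonneg[OF u] nrm_nonneg[OF v] by simp
qed

lemma nrm_scale: assumes w: "w \<in> l1" shows "nrm (\<lambda>i. c * w i) = \<bar>c\<bar> * nrm w"
proof -
  have "sq (\<lambda>i. c * w i) = c\<^sup>2 * sq w"
    unfolding sq_def using suminf_mult[OF l1_sq_summable[OF w], of "c\<^sup>2"] by (simp add: power_mult_distrib)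
  then show ?thesis unfolding nrm_def by (simp add: real_sqrt_mult)
qed

lemma nrm_diff: assumes u: "u \<in> l1" and v: "v \<in> l1"
  shows "nrm (\<lambda>i. u i - v i) \<le> nrm u + nrm v"
  using nrm_add[OF u l1_scale[OF v, of "-1", THEN conjunct1]] nrm_scale[OF v, of "-1"] by simp

lemma nrm_sum: "finite J \<Longrightarrow> (\<And>j. j \<in> J \<Longrightarrow> f j \<in> l1) \<Longrightarrow>
  nrm (\<lambda>i. \<Sum>j\<in>J. f j i) \<le> (\<Sum>j\<in>J. nrm (f j))"
proof (induction J rule: finite_induct)
  case empty
  then show ?case by (simp add: nrm_def sq_def)
next
  case (insert a J)
  have "nrm (\<lambda>i. \<Sum>j\<in>insert a J. f j i) = nrm (\<lambda>i. f a i + (\<Sum>j\<in>J. f j i))" using insert by simp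
  also have "\<dots> \<le> nrm (f a) + nrm (\<lambda>i. \<Sum>j\<in>J. f j i)"
    using insert by (intro nrm_add l1_sum[THEN conjunct1]) auto
  also have "\<dots> \<le> nrm (f a) + (\<Sum>j\<in>J. nrm (f j))" using insert by simp
  finally show ?case using insert by simp
qed

lemma parallelogram: assumes u: "u \<in> l1" and v: "v \<in> l1"
  shows "sq (\<lambda>i. u i - v i) = 2 * sq u + 2 * sq v - 4 * sq (\<lambda>i. (u i + v i) / 2)"
proof -
  have m: "(\<lambda>i. (u i + v i) / 2) \<in> l1" using l1_scale[OF l1_add[OF u v, THEN conjunct1], of "1/2"] by simp
  have su: "summable (\<lambda>n. (u n)\<^sup>2)" and sv: "summable (\<lambda>n. (v n)\<^sup>2)"
    and sm: "summable (\<lambda>n. ((u n + v n) / 2)\<^sup>2)" using u v m l1_sq_summable by blast+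
  have "(\<lambda>i. (u i - v i)\<^sup>2) = (\<lambda>i. 2 * (u i)\<^sup>2 + 2 * (v i)\<^sup>2 - 4 * ((u i + v i) / 2)\<^sup>2)"
    by (auto simp: fun_eq_iff power2_eq_square algebra_simps)
  then have "sq (\<lambda>i. u i - v i) = (\<Sum>i. 2 * (u i)\<^sup>2 + 2 * (v i)\<^sup>2 - 4 * ((u i + v i) / 2)\<^sup>2)"
    unfolding sq_def by simp
  also have "\<dots> = (\<Sum>i. 2 * (u i)\<^sup>2 + 2 * (v i)\<^sup>2) - (\<Sum>i. 4 * ((u i + v i) / 2)\<^sup>2)"
    by (rule suminf_diff[symmetric]) (intro summable_add summable_mult su sv sm)+
  also have "\<dots> = (\<Sum>i. 2 * (u i)\<^sup>2) + (\<Sum>i. 2 * (v i)\<^sup>2) - (\<Sum>i. 4 * ((u i + v i) / 2)\<^sup>2)"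
    by (subst suminf_add[symmetric]) (intro summable_mult su sv, simp)+
  also have "\<dots> = 2 * sq u + 2 * sq v - 4 * sq (\<lambda>i. (u i + v i) / 2)"
    unfolding sq_def by (simp add: suminf_mult su sv sm)
  finally show ?thesis .
qed

lemma ds_nrm: "dunford_schwartz S \<Longrightarrow> w \<in> l1 \<Longrightarrow> nrm (S w) \<le> nrm w"
  unfolding nrm_def by (intro real_sqrt_le_mono sq_contract)

lemma sum_split_add: "(\<Sum>j<n + k. (a::nat\<Rightarrow>real) j) = (\<Sum>j<n. a j) + (\<Sum>j<k. a (j + n))"
  by (induction k) (auto simp: add.commute)

lemma telescope_swap: "(\<Sum>j<n. (a::nat\<Rightarrow>real) j) - (\<Sum>j<n. a (j + k)) = (\<Sum>j<k. a j) - (\<Sum>j<k. a (j + n))"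
  using sum_split_add[where n=n and k=k and a=a] sum_split_add[where n=k and k=n and a=a] by (simp add: add.commute)



lemma ext_sum: "N1 \<le> (N::nat) \<Longrightarrow> (\<Sum>k<N. if k < N1 then (f k::real) else 0) = (\<Sum>k<N1. f k)"
proof -
  assume "N1 \<le> N"
  then have e: "{k \<in> {..<N}. k < N1} = {..<N1}" by auto
  have "(\<Sum>k<N. if k < N1 then f k else 0) = (\<Sum>k\<in>{k \<in> {..<N}. k < N1}. f k)"
    by (rule sum.inter_filter[symmetric]) simp
  then show ?thesis using e by simp
qed

context
  fixes T :: "seq \<Rightarrow> seq" and y :: seq
  assumes T: "dunford_schwartz T" and y: "y \<in> l1"
begin

definition Y :: "nat \<Rightarrow> seq" where "Y k = (T ^^ k) y"

lemma Y_l1: "Y k \<in> l1"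
  unfolding Y_def using ds_l1[OF ds_pow[OF T] y] by blast

lemma Y_nrm: "nrm (Y k) \<le> nrm y"
  unfolding Y_def by (rule ds_nrm[OF ds_pow[OF T] y])

lemma avg_l1: "w \<in> l1 \<Longrightarrow> avg T n w \<in> l1"
  using ds_l1[OF ds_avg[OF T]] by blast

definition Cset :: "seq set" where
  "Cset = {w. \<exists>N lam. (\<forall>k. 0 \<le> lam k) \<and> (\<Sum>k<N. lam k) = 1 \<and> w = (\<lambda>i. \<Sum>k<N. lam k * Y k i)}"

lemma C_l1: "w \<in> Cset \<Longrightarrow> w \<in> l1"
  unfolding Cset_def using l1_sum[of _ "\<lambda>k i. _ k * Y k i"] l1_scale[OF Y_l1] by auto

lemma avg_in_C: "0 < n \<Longrightarrow> avg T n y \<in> Cset"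
  unfolding Cset_def avg_def Y_def
  by (rule CollectI, rule exI[of _ n], rule exI[of _ "\<lambda>k. 1 / real n"]) simp

lemma C_mid: assumes u: "u \<in> Cset" and v: "v \<in> Cset" shows "(\<lambda>i. (u i + v i) / 2) \<in> Cset"
proof -
  obtain N1 l1 where l1: "\<forall>k. 0 \<le> l1 k" "(\<Sum>k<N1. l1 k) = 1" "u = (\<lambda>i. \<Sum>k<N1. l1 k * Y k i)"
    using u unfolding Cset_def by blast
  obtain N2 l2 where l2: "\<forall>k. 0 \<le> l2 k" "(\<Sum>k<N2. l2 k) = 1" "v = (\<lambda>i. \<Sum>k<N2. l2 k * Y k i)"
    using v unfolding Cset_def by blast
  define lam where "lam k = ((if k < N1 then l1 k else 0) + (if k < N2 then l2 k else 0)) / 2" for k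
  have "\<forall>k. 0 \<le> lam k" unfolding lam_def using l1(1) l2(1) by auto
  moreover have "(\<Sum>k<N1+N2. lam k) = 1"
  proof -
    have "(\<Sum>k<N1+N2. lam k) = ((\<Sum>k<N1+N2. if k < N1 then l1 k else 0) + (\<Sum>k<N1+N2. if k < N2 then l2 k else 0)) / 2"
      unfolding lam_def by (simp add: sum_divide_distrib[symmetric] sum.distrib)
    also have "\<dots> = 1" using ext_sum[of N1 "N1+N2" l1] ext_sum[of N2 "N1+N2" l2] l1(2) l2(2) by simp
    finally show ?thesis .
  qed
  moreover have "(\<lambda>i. (u i + v i) / 2) = (\<lambda>i. \<Sum>k<N1+N2. lam k * Y k i)"
  proof
    fix i
    have "(\<Sum>k<N1+N2. lam k * Y k i) = (\<Sum>k<N1+N2. ((if k < N1 then l1 k * Y k i else 0) + (if k < N2 then l2 k * Y k i else 0)) / 2)"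
      by (rule sum.cong) (auto simp: lam_def field_simps)
    also have "\<dots> = ((\<Sum>k<N1+N2. if k < N1 then l1 k * Y k i else 0) + (\<Sum>k<N1+N2. if k < N2 then l2 k * Y k i else 0)) / 2"
      by (simp add: sum_divide_distrib[symmetric] sum.distrib)
    also have "\<dots> = (u i + v i) / 2"
      using ext_sum[of N1 "N1+N2" "\<lambda>k. l1 k * Y k i"] ext_sum[of N2 "N1+N2" "\<lambda>k. l2 k * Y k i"] l1(3) l2(3) by simp
    finally show "(u i + v i) / 2 = (\<Sum>k<N1+N2. lam k * Y k i)" by simp
  qed
  ultimately show ?thesis unfolding Cset_def by blast
qed

definition dd :: real where "dd = Inf (nrm ` Cset)"

lemma C_ne: "nrm ` Cset \<noteq> {}" using avg_in_C[of 1] by auto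

lemma C_bdd: "bdd_below (nrm ` Cset)"
  by (rule bdd_belowI[of _ 0]) (auto intro: nrm_nonneg C_l1)

lemma dd_le: "w \<in> Cset \<Longrightarrow> dd \<le> nrm w"
  unfolding dd_def by (rule cInf_lower[OF _ C_bdd]) simp

lemma dd_nonneg: "0 \<le> dd"
  unfolding dd_def by (rule cInf_greatest[OF C_ne]) (auto intro: nrm_nonneg C_l1)


lemma avg_Y: "avg T n (Y k) = (\<lambda>i. \<Sum>j<n. (1 / real n) * Y (j + k) i)"
  unfolding avg_def Y_def by (simp add: funpow_add)

lemma D_bound: "0 < n \<Longrightarrow> nrm (\<lambda>i. avg T n y i - avg T n (Y k) i) \<le> 2 * real k * nrm y / real n"
proof -
  assume n: "0 < n"
  have eq: "(\<lambda>i. avg T n y i - avg T n (Y k) i) =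
    (\<lambda>i. (1 / real n) * ((\<lambda>i. \<Sum>j<k. Y j i) i - (\<lambda>i. \<Sum>j<k. Y (j + n) i) i))"
  proof
    fix i
    have "avg T n y i = (\<Sum>j<n. Y j i) / real n" unfolding avg_eq Y_def ..
    moreover have "avg T n (Y k) i = (\<Sum>j<n. Y (j + k) i) / real n"
      unfolding avg_Y by (simp add: sum_divide_distrib)
    ultimately have "avg T n y i - avg T n (Y k) i = ((\<Sum>j<n. Y j i) - (\<Sum>j<n. Y (j + k) i)) / real n"
      by (simp add: diff_divide_distrib)
    also have "\<dots> = ((\<Sum>j<k. Y j i) - (\<Sum>j<k. Y (j + n) i)) / real n"
      using telescope_swap[where a = "\<lambda>j. Y j i" and n = n and k = k] by simp
    finally show "avg T n y i - avg T n (Y k) i = (1 / real n) * ((\<lambda>i. \<Sum>j<k. Y j i) i - (\<lambda>i. \<Sum>j<k. Y (j + n) i) i)"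
      by simp
  qed
  have A: "(\<lambda>i. \<Sum>j<k. Y j i) \<in> l1" and B: "(\<lambda>i. \<Sum>j<k. Y (j + n) i) \<in> l1"
    using l1_sum[of "{..<k}" "\<lambda>j. Y j"] l1_sum[of "{..<k}" "\<lambda>j. Y (j + n)"] Y_l1 by auto
  have nA: "nrm (\<lambda>i. \<Sum>j<k. Y j i) \<le> real k * nrm y"
    using nrm_sum[of "{..<k}" "\<lambda>j. Y j"] Y_l1 sum_mono[of "{..<k}" "\<lambda>j. nrm (Y j)" "\<lambda>j. nrm y"] Y_nrm by fastforce
  have nB: "nrm (\<lambda>i. \<Sum>j<k. Y (j + n) i) \<le> real k * nrm y"
    using nrm_sum[of "{..<k}" "\<lambda>j. Y (j + n)"] Y_l1 sum_mono[of "{..<k}" "\<lambda>j. nrm (Y (j + n))" "\<lambda>j. nrm y"] Y_nrm by fastforce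
  have "nrm (\<lambda>i. avg T n y i - avg T n (Y k) i) = (1 / real n) * nrm (\<lambda>i. (\<Sum>j<k. Y j i) - (\<Sum>j<k. Y (j + n) i))"
    unfolding eq using nrm_scale[OF l1_minus[OF A B, THEN conjunct1], of "1 / real n"] by simp
  also have "\<dots> \<le> (1 / real n) * (real k * nrm y + real k * nrm y)"
    using nrm_diff[OF A B] nA nB by (intro mult_left_mono) auto
  finally show ?thesis by (simp add: field_simps)
qed

lemma avg_bound:
  assumes w: "w \<in> Cset" and n: "0 < n"
  shows "\<exists>N. \<forall>n>0. nrm (avg T n y) \<le> nrm w + 2 * real N * nrm y / real n"
proof -
  obtain N lam where lam: "\<forall>k. 0 \<le> lam k" "(\<Sum>k<N. lam k) = 1" "w = (\<lambda>i. \<Sum>k<N. lam k * Y k i)"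
    using w unfolding Cset_def by blast
  show ?thesis
  proof (intro exI allI impI)
    fix n :: nat assume n: "0 < n"
    have yl: "y \<in> linf" by (rule l1_linf[OF y])
    have Yl: "Y k \<in> linf" for k by (rule l1_linf[OF Y_l1])
    define D where "D k = (\<lambda>i. avg T n y i - avg T n (Y k) i)" for k
    have Dl: "D k \<in> l1" for k unfolding D_def using l1_minus[OF avg_l1[OF y] avg_l1[OF Y_l1]] by blast
    have aw: "avg T n w = (\<lambda>i. \<Sum>k<N. lam k * avg T n (Y k) i)"
    proof -
      have "avg T n w = (\<lambda>i. \<Sum>k<N. avg T n (\<lambda>i. lam k * Y k i) i)"
        unfolding lam(3) by (rule ds_sum[OF ds_avg[OF T]]) (auto intro: linf_scale Yl)
      also have "\<dots> = (\<lambda>i. \<Sum>k<N. lam k * avg T n (Y k) i)"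
        using ds_scale[OF ds_avg[OF T] Yl] by simp
      finally show ?thesis .
    qed
    have diff: "(\<lambda>i. avg T n y i - avg T n w i) = (\<lambda>i. \<Sum>k<N. lam k * D k i)"
    proof
      fix i
      have e1: "(\<Sum>k<N. lam k * avg T n y i) = avg T n y i" using lam(2) by (simp add: sum_distrib_right[symmetric])
      have e2: "(\<Sum>k<N. lam k * D k i) = (\<Sum>k<N. lam k * avg T n y i) - (\<Sum>k<N. lam k * avg T n (Y k) i)"
        unfolding D_def by (simp add: right_diff_distrib sum_subtractf)
      have e3: "avg T n w i = (\<Sum>k<N. lam k * avg T n (Y k) i)" unfolding aw ..
      show "avg T n y i - avg T n w i = (\<Sum>k<N. lam k * D k i)"
        using e1 e2 e3 by linarith
    qed
    have "nrm (\<lambda>i. avg T n y i - avg T n w i) \<le> (\<Sum>k<N. nrm (\<lambda>i. lam k * D k i))"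
      unfolding diff by (rule nrm_sum) (auto intro: l1_scale[THEN conjunct1] Dl)
    also have "\<dots> \<le> (\<Sum>k<N. lam k * (2 * real N * nrm y / real n))"
    proof (rule sum_mono)
      fix k assume k: "k \<in> {..<N}"
      have "nrm (\<lambda>i. lam k * D k i) = lam k * nrm (D k)" using nrm_scale[OF Dl] lam(1) by simp
      also have "\<dots> \<le> lam k * (2 * real k * nrm y / real n)"
        using mult_left_mono[OF D_bound[OF n, of k] lam(1)[rule_format, of k]] unfolding D_def .
      also have "\<dots> \<le> lam k * (2 * real N * nrm y / real n)"
        using k lam(1) nrm_nonneg[OF y] n by (intro mult_left_mono divide_right_mono) (auto intro!: mult_right_mono)
      finally show "nrm (\<lambda>i. lam k * D k i) \<le> lam k * (2 * real N * nrm y / real n)" .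
    qed
    also have "\<dots> = (\<Sum>k<N. lam k) * (2 * real N * nrm y / real n)" by (rule sum_distrib_right[symmetric])
    also have "\<dots> = 2 * real N * nrm y / real n" using lam(2) by simp
    finally have d1: "nrm (\<lambda>i. avg T n y i - avg T n w i) \<le> 2 * real N * nrm y / real n" .
    have wl1: "w \<in> l1" by (rule C_l1[OF w])
    have "avg T n y = (\<lambda>i. avg T n w i + (avg T n y i - avg T n w i))" by simp
    then have "nrm (avg T n y) \<le> nrm (avg T n w) + nrm (\<lambda>i. avg T n y i - avg T n w i)"
      using nrm_add[OF avg_l1[OF wl1] l1_minus[OF avg_l1[OF y] avg_l1[OF wl1], THEN conjunct1]] by metis
    also have "\<dots> \<le> nrm w + 2 * real N * nrm y / real n"
      using d1 ds_nrm[OF ds_avg[OF T, of n] wl1] by linarith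
    finally show "nrm (avg T n y) \<le> nrm w + 2 * real N * nrm y / real n" .
  qed
qed

end


context
  fixes T :: "seq \<Rightarrow> seq" and y :: seq
  assumes T: "dunford_schwartz T" and y: "y \<in> l1"
begin

lemma lim_upper:
  assumes e: "0 < e"
  shows "\<exists>M>0. \<forall>n\<ge>M. nrm (avg T n y) \<le> dd T y + e"
proof -
  have "Inf (nrm ` Cset T y) < dd T y + e/2" using dd_def[OF T y] e by simp
  then obtain w where w: "w \<in> Cset T y" "nrm w < dd T y + e/2"
    using cInf_lessD[OF C_ne[OF T y]] by blast
  obtain N where N: "\<forall>n>0. nrm (avg T n y) \<le> nrm w + 2 * real N * nrm y / real n"
    using avg_bound[OF T y w(1), of 1] by auto
  define K where "K = 2 * real N * nrm y"
  have K0: "0 \<le> K" unfolding K_def using nrm_nonneg[OF y] by simp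
  define M where "M = nat \<lceil>2 * K / e\<rceil> + 1"
  show ?thesis
  proof (intro exI conjI allI impI)
    show "0 < M" unfolding M_def by simp
    fix n assume n: "M \<le> n"
    then have n0: "0 < n" unfolding M_def by simp
    have c1: "2 * K / e \<le> real (nat \<lceil>2 * K / e\<rceil>)" by (rule real_nat_ceiling_ge)
    have c2: "real M \<le> real n" using n by simp
    have "2 * K / e < real n" using c1 c2 unfolding M_def by simp
    then have "2 * K < real n * e" using e by (simp add: divide_less_eq)
    then have "K / real n \<le> e / 2" using n0 by (simp add: divide_le_eq field_simps)
    moreover have "nrm (avg T n y) \<le> nrm w + K / real n" using N n0 unfolding K_def by simp
    ultimately show "nrm (avg T n y) \<le> dd T y + e" using w(2) by linarith
  qed
qed

lemma avg_cauchy: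
  assumes e: "0 < e"
  shows "\<exists>M. \<forall>m\<ge>M. \<forall>n\<ge>M. nrm (\<lambda>i. avg T m y i - avg T n y i) < e"
proof -
  define d where "d = dd T y"
  have d0: "0 \<le> d" unfolding d_def by (rule dd_nonneg[OF T y])
  define \<delta> where "\<delta> = min 1 (e\<^sup>2 / (8 * (2 * d + 1)))"
  have \<delta>0: "0 < \<delta>" unfolding \<delta>_def using e d0 by simp
  obtain M where M: "0 < M" "\<forall>n\<ge>M. nrm (avg T n y) \<le> d + \<delta>"
    using lim_upper[OF \<delta>0] unfolding d_def by blast
  show ?thesis
  proof (intro exI allI impI)
    fix m n assume m: "M \<le> m" and n: "M \<le> n"
    let ?a = "avg T m y" and ?b = "avg T n y"
    have aC: "?a \<in> Cset T y" and bC: "?b \<in> Cset T y" using m n M(1) by (auto intro: avg_in_C[OF T y])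
    have al: "?a \<in> l1" and bl: "?b \<in> l1" using aC bC C_l1[OF T y] by auto
    have mC: "(\<lambda>i. (?a i + ?b i) / 2) \<in> Cset T y" by (rule C_mid[OF T y aC bC])
    have ml: "(\<lambda>i. (?a i + ?b i) / 2) \<in> l1" by (rule C_l1[OF T y mC])
    have sqn: "sq w = (nrm w)\<^sup>2" if "w \<in> l1" for w unfolding nrm_def using sq_nonneg[OF that] by simp
    have ha: "nrm ?a \<le> d + \<delta>" "d \<le> nrm ?a" using M(2) m dd_le[OF T y aC] unfolding d_def by auto
    have hb: "nrm ?b \<le> d + \<delta>" "d \<le> nrm ?b" using M(2) n dd_le[OF T y bC] unfolding d_def by auto
    have hm: "d \<le> nrm (\<lambda>i. (?a i + ?b i) / 2)" using dd_le[OF T y mC] unfolding d_def by auto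
    have "sq (\<lambda>i. ?a i - ?b i) = 2 * sq ?a + 2 * sq ?b - 4 * sq (\<lambda>i. (?a i + ?b i) / 2)"
      by (rule parallelogram[OF al bl])
    also have "\<dots> = 2 * (nrm ?a)\<^sup>2 + 2 * (nrm ?b)\<^sup>2 - 4 * (nrm (\<lambda>i. (?a i + ?b i) / 2))\<^sup>2"
      using sqn[OF al] sqn[OF bl] sqn[OF ml] by simp
    also have "\<dots> \<le> 2 * (d + \<delta>)\<^sup>2 + 2 * (d + \<delta>)\<^sup>2 - 4 * d\<^sup>2"
    proof -
      have "(nrm ?a)\<^sup>2 \<le> (d + \<delta>)\<^sup>2" using ha d0 by (intro power_mono) auto
      moreover have "(nrm ?b)\<^sup>2 \<le> (d + \<delta>)\<^sup>2" using hb d0 by (intro power_mono) auto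
      moreover have "d\<^sup>2 \<le> (nrm (\<lambda>i. (?a i + ?b i) / 2))\<^sup>2" using hm d0 by (intro power_mono) auto
      ultimately show ?thesis by linarith
    qed
    also have "\<dots> = 4 * \<delta> * (2 * d + \<delta>)" by (simp add: power2_eq_square algebra_simps)
    also have "\<dots> \<le> 4 * \<delta> * (2 * d + 1)"
    proof -
      have "\<delta> \<le> 1" unfolding \<delta>_def by simp
      then show ?thesis using \<delta>0 by (intro mult_left_mono) auto
    qed
    also have "\<dots> \<le> 4 * (e\<^sup>2 / (8 * (2 * d + 1))) * (2 * d + 1)"
    proof -
      have "\<delta> \<le> e\<^sup>2 / (8 * (2 * d + 1))" unfolding \<delta>_def by simp
      then have "4 * \<delta> \<le> 4 * (e\<^sup>2 / (8 * (2 * d + 1)))" by simp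
      then show ?thesis by (rule mult_right_mono) (use d0 in simp)
    qed
    also have "\<dots> = e\<^sup>2 / 2" using d0 by (simp add: field_simps)
    also have "\<dots> < e\<^sup>2" using e by simp
    finally have "sq (\<lambda>i. ?a i - ?b i) < e\<^sup>2" .
    then have "sqrt (sq (\<lambda>i. ?a i - ?b i)) < sqrt (e\<^sup>2)" by (rule real_sqrt_less_mono)
    then show "nrm (\<lambda>i. ?a i - ?b i) < e" unfolding nrm_def using e by simp
  qed
qed

end


lemma sup_norm_nonneg': "(\<And>i. \<bar>f i\<bar> \<le> B) \<Longrightarrow> 0 \<le> sup_norm f"
  using sup_norm_nonneg linfI by blast

lemma l1_c0: "w \<in> l1 \<Longrightarrow> w \<longlonglongrightarrow> 0"
proof -
  assume "w \<in> l1"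
  then have "(\<lambda>n. \<bar>w n\<bar>) \<longlonglongrightarrow> 0" unfolding l1_def by (intro summable_LIMSEQ_zero) simp
  then show ?thesis by (simp add: tendsto_rabs_zero_iff)
qed

lemma E_c0:
  assumes fs: "fully_symmetric E N" and ne: "E \<noteq> linf" and x: "x \<in> E"
  shows "x \<longlonglongrightarrow> 0"
proof (rule ccontr)
  assume nc: "\<not> x \<longlonglongrightarrow> 0"
  have sym: "symmetric_seq_space E N" using fs unfolding fully_symmetric_def by simp
  have Elinf: "E \<subseteq> linf" using sym unfolding symmetric_seq_space_def by simp
  have Escale: "\<And>x c. x \<in> E \<Longrightarrow> (\<lambda>i. c * x i) \<in> E" using sym unfolding symmetric_seq_space_def by simp
  have Erearr: "\<And>y z. y \<in> E \<Longrightarrow> z \<in> linf \<Longrightarrow> (\<forall>k. rearr z k \<le> rearr y k) \<Longrightarrow> z \<in> E"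
    using sym unfolding symmetric_seq_space_def by blast
  obtain a where a: "0 < a" "\<forall>M. \<exists>n\<ge>M. a \<le> \<bar>x n\<bar>"
    using nc unfolding LIMSEQ_iff by (auto simp: not_less)
  have inf: "infinite {i. a \<le> \<bar>x i\<bar>}"
    unfolding infinite_nat_iff_unbounded_le using a(2) by auto
  have "linf \<subseteq> E"
  proof
    fix z assume z: "z \<in> linf"
    define B where "B = sup_norm z"
    have B0: "0 \<le> B" unfolding B_def by (rule sup_norm_nonneg[OF z])
    define c where "c = (B + 1) / a"
    have c0: "0 < c" unfolding c_def using B0 a(1) by simp
    define w where "w = (\<lambda>i. c * x i)"
    have wE: "w \<in> E" unfolding w_def by (rule Escale[OF x])
    have "{i. a \<le> \<bar>x i\<bar>} \<subseteq> {i. B + 1 \<le> \<bar>w i\<bar>}"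
    proof
      fix i assume "i \<in> {i. a \<le> \<bar>x i\<bar>}"
      then have "c * a \<le> c * \<bar>x i\<bar>" using c0 by simp
      moreover have "c * a = B + 1" unfolding c_def using a(1) by simp
      ultimately show "i \<in> {i. B + 1 \<le> \<bar>w i\<bar>}" unfolding w_def using c0 by (simp add: abs_mult)
    qed
    then have inf2: "infinite {i. B + 1 \<le> \<bar>w i\<bar>}" using inf finite_subset by blast
    have "\<forall>k. rearr z k \<le> rearr w k"
    proof
      fix k
      have "rearr z k \<le> B" unfolding B_def by (rule rearr_le_sup_norm[OF z])
      also have "\<dots> \<le> B + 1" by simp
      also have "\<dots> \<le> rearr w k" by (rule rearr_geI_inf[OF _ inf2]) (use wE Elinf in blast)
      finally show "rearr z k \<le> rearr w k" .
    qed
    then show "z \<in> E" by (rule Erearr[OF wE z])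
  qed
  then show False using ne Elinf by blast
qed



lemma approx_l1:
  assumes x: "(x::seq) \<longlonglongrightarrow> 0" and e: "0 < e"
  shows "\<exists>y\<in>l1. \<forall>i. \<bar>x i - y i\<bar> \<le> e"
proof -
  obtain N where N: "\<forall>n\<ge>N. norm (x n - 0) < e" using x e unfolding LIMSEQ_iff by blast
  define y where "y = (\<lambda>i. if i < N then x i else 0)"
  have "{i. y i \<noteq> 0} \<subseteq> {..<N}" unfolding y_def by auto
  then have "finite {i. y i \<noteq> 0}" by (rule finite_subset) simp
  then have "y \<in> l1" using l1_finite_support by blast
  moreover have "\<forall>i. \<bar>x i - y i\<bar> \<le> e"
  proof
    fix i show "\<bar>x i - y i\<bar> \<le> e"
    proof (cases "i < N")
      case True then show ?thesis unfolding y_def using e by simp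
    next
      case False then show ?thesis unfolding y_def using N by (simp add: less_imp_le not_less)
    qed
  qed
  ultimately show ?thesis by blast
qed

context
  fixes T :: "seq \<Rightarrow> seq"
  assumes T: "dunford_schwartz T"
begin

lemma avg_abs_le: "w \<in> linf \<Longrightarrow> \<bar>avg T n w i\<bar> \<le> sup_norm w"
  using sup_norm_ge[OF ds_linf[OF ds_avg[OF T] ], of w n i] ds_sup[OF ds_avg[OF T], of w n] by linarith

lemma avg_minus: "w \<in> linf \<Longrightarrow> v \<in> linf \<Longrightarrow> avg T n w i - avg T n v i = avg T n (\<lambda>j. w j - v j) i"
  using ds_minus[OF ds_avg[OF T], of w v n] by simp

lemma unif_cauchy:
  assumes x: "x \<longlonglongrightarrow> 0" and e: "0 < e"
  shows "\<exists>M. \<forall>m\<ge>M. \<forall>n\<ge>M. \<forall>i. \<bar>avg T m x i - avg T n x i\<bar> < e"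
proof -
  have xl: "x \<in> linf" by (rule c0_linf[OF x])
  obtain y where y: "y \<in> l1" "\<forall>i. \<bar>x i - y i\<bar> \<le> e/3" using approx_l1[OF x, of "e/3"] e by auto
  have yl: "y \<in> linf" by (rule l1_linf[OF y(1)])
  have dl: "(\<lambda>j. x j - y j) \<in> linf" by (rule linf_minus[OF xl yl])
  have ds: "sup_norm (\<lambda>j. x j - y j) \<le> e/3" by (rule sup_norm_le) (use y(2) in auto)
  obtain M where M: "\<forall>m\<ge>M. \<forall>n\<ge>M. nrm (\<lambda>i. avg T m y i - avg T n y i) < e/3"
    using avg_cauchy[OF T y(1), of "e/3"] e by auto
  show ?thesis
  proof (intro exI allI impI)
    fix m n i assume m: "M \<le> m" and n: "M \<le> n"
    have a1: "\<bar>avg T m x i - avg T m y i\<bar> \<le> e/3"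
      using avg_minus[OF xl yl, of m i] avg_abs_le[OF dl, of m i] ds by linarith
    have a2: "\<bar>avg T n x i - avg T n y i\<bar> \<le> e/3"
      using avg_minus[OF xl yl, of n i] avg_abs_le[OF dl, of n i] ds by linarith
    have dl1: "(\<lambda>i. avg T m y i - avg T n y i) \<in> l1"
      using l1_minus[OF avg_l1[OF T y(1) y(1)] avg_l1[OF T y(1) y(1)]] by blast
    have a3: "\<bar>avg T m y i - avg T n y i\<bar> < e/3"
      using nrm_ge[OF dl1, of i] M m n by fastforce
    show "\<bar>avg T m x i - avg T n x i\<bar> < e" using a1 a2 a3 by linarith
  qed
qed

lemma conv_exists:
  assumes x: "x \<longlonglongrightarrow> 0"
  shows "\<exists>xh. xh \<in> linf \<and> xh \<longlonglongrightarrow> 0 \<and> (\<lambda>n. sup_norm (\<lambda>i. avg T n x i - xh i)) \<longlonglongrightarrow> 0"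
proof -
  have xl: "x \<in> linf" by (rule c0_linf[OF x])
  define xh where "xh i = lim (\<lambda>n. avg T n x i)" for i
  have conv: "(\<lambda>n. avg T n x i) \<longlonglongrightarrow> xh i" for i
  proof -
    have "Cauchy (\<lambda>n. avg T n x i)"
    proof (rule CauchyI)
      fix e :: real assume "0 < e"
      then obtain M where "\<forall>m\<ge>M. \<forall>n\<ge>M. \<forall>i. \<bar>avg T m x i - avg T n x i\<bar> < e"
        using unif_cauchy[OF x] by blast
      then show "\<exists>M. \<forall>m\<ge>M. \<forall>n\<ge>M. norm (avg T m x i - avg T n x i) < e" by auto
    qed
    then show ?thesis unfolding xh_def using Cauchy_convergent_iff convergent_LIMSEQ_iff by blast
  qed
  have unif: "\<exists>M. \<forall>m\<ge>M. \<forall>i. \<bar>avg T m x i - xh i\<bar> \<le> e" if e: "0 < e" for e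
  proof -
    obtain M where M: "\<forall>m\<ge>M. \<forall>n\<ge>M. \<forall>i. \<bar>avg T m x i - avg T n x i\<bar> < e"
      using unif_cauchy[OF x e] by blast
    show ?thesis
    proof (intro exI allI impI)
      fix m i assume m: "M \<le> m"
      show "\<bar>avg T m x i - xh i\<bar> \<le> e"
      proof (rule LIMSEQ_le_const2)
        show "(\<lambda>n. \<bar>avg T m x i - avg T n x i\<bar>) \<longlonglongrightarrow> \<bar>avg T m x i - xh i\<bar>"
          by (intro tendsto_intros conv)
        show "\<exists>N. \<forall>n\<ge>N. \<bar>avg T m x i - avg T n x i\<bar> \<le> e"
          using M m by (intro exI[of _ M]) (auto intro: less_imp_le)
      qed
    qed
  qed
  obtain M1 where M1: "\<forall>m\<ge>M1. \<forall>i. \<bar>avg T m x i - xh i\<bar> \<le> 1" using unif[of 1] by auto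
  have xhl: "xh \<in> linf"
  proof (rule linfI)
    fix i
    have "\<bar>xh i\<bar> \<le> \<bar>avg T M1 x i\<bar> + \<bar>avg T M1 x i - xh i\<bar>" by linarith
    also have "\<dots> \<le> sup_norm x + 1" using avg_abs_le[OF xl, of M1 i] M1 by (intro add_mono) auto
    finally show "\<bar>xh i\<bar> \<le> sup_norm x + 1" .
  qed
  have lim: "(\<lambda>n. sup_norm (\<lambda>i. avg T n x i - xh i)) \<longlonglongrightarrow> 0"
  proof (rule LIMSEQ_I)
    fix e :: real assume e: "0 < e"
    obtain M where M: "\<forall>m\<ge>M. \<forall>i. \<bar>avg T m x i - xh i\<bar> \<le> e/2" using unif[of "e/2"] e by auto
    show "\<exists>no. \<forall>n\<ge>no. norm (sup_norm (\<lambda>i. avg T n x i - xh i) - 0) < e"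
    proof (intro exI allI impI)
      fix n assume n: "M \<le> n"
      have "sup_norm (\<lambda>i. avg T n x i - xh i) \<le> e/2" by (rule sup_norm_le) (use M n in auto)
      moreover have "0 \<le> sup_norm (\<lambda>i. avg T n x i - xh i)" by (rule sup_norm_nonneg'[of _ "e/2"]) (use M n in auto)
      ultimately show "norm (sup_norm (\<lambda>i. avg T n x i - xh i) - 0) < e" using e by simp
    qed
  qed
  have xh0: "xh \<longlonglongrightarrow> 0"
  proof (rule LIMSEQ_I)
    fix e :: real assume e: "0 < e"
    obtain y where y: "y \<in> l1" "\<forall>i. \<bar>x i - y i\<bar> \<le> e/4" using approx_l1[OF x, of "e/4"] e by auto
    have yl: "y \<in> linf" by (rule l1_linf[OF y(1)])
    have dl: "(\<lambda>j. x j - y j) \<in> linf" by (rule linf_minus[OF xl yl])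
    have ds: "sup_norm (\<lambda>j. x j - y j) \<le> e/4" by (rule sup_norm_le) (use y(2) in auto)
    obtain M where M: "\<forall>m\<ge>M. \<forall>i. \<bar>avg T m x i - xh i\<bar> \<le> e/4" using unif[of "e/4"] e by auto
    have "avg T M y \<longlonglongrightarrow> 0" by (rule l1_c0[OF avg_l1[OF T y(1) y(1)]])
    then obtain K where K: "\<forall>i\<ge>K. norm (avg T M y i - 0) < e/4" using e unfolding LIMSEQ_iff by (meson zero_less_divide_iff zero_less_numeral)
    show "\<exists>no. \<forall>n\<ge>no. norm (xh n - 0) < e"
    proof (intro exI allI impI)
      fix i assume i: "K \<le> i"
      have a1: "\<bar>avg T M x i - xh i\<bar> \<le> e/4" using M by auto
      have a2: "\<bar>avg T M x i - avg T M y i\<bar> \<le> e/4"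
        using avg_minus[OF xl yl, of M i] avg_abs_le[OF dl, of M i] ds by linarith
      have a3: "\<bar>avg T M y i\<bar> < e/4" using K i by auto
      show "norm (xh i - 0) < e" using a1 a2 a3 e by (simp only: real_norm_def diff_zero)
    qed
  qed
  show ?thesis using xhl xh0 lim by blast
qed

end


lemma major:
  assumes T: "dunford_schwartz T" and x: "x \<longlonglongrightarrow> 0" and xh0: "xh \<longlonglongrightarrow> 0"
    and lim: "(\<lambda>n. sup_norm (\<lambda>i. avg T n x i - xh i)) \<longlonglongrightarrow> 0"
  shows "majorized xh x"
  unfolding majorized_def
proof
  fix k :: nat
  define t where "t = rearr x k"
  define u where "u = (\<lambda>m. sgn (x m) * max (\<bar>x m\<bar> - t) 0)"
  have L: "u \<in> l1" "\<forall>m. \<bar>x m - u m\<bar> \<le> t" "real (Suc k) * t + l1_norm u \<le> (\<Sum>i\<le>k. rearr x i)"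
    using rearr_sum_lower[OF x, of k] unfolding t_def u_def by auto
  have xl: "x \<in> linf" by (rule c0_linf[OF x])
  have xhl: "xh \<in> linf" by (rule c0_linf[OF xh0])
  have ul: "u \<in> linf" by (rule l1_linf[OF L(1)])
  have t0: "0 \<le> t" unfolding t_def by (rule rearr_nonneg[OF xl])
  show "(\<Sum>i\<le>k. rearr xh i) \<le> (\<Sum>i\<le>k. rearr x i)"
  proof (rule field_le_epsilon)
    fix e :: real assume e: "0 < e"
    define \<epsilon> where "\<epsilon> = e / real (Suc k)"
    have \<epsilon>0: "0 < \<epsilon>" unfolding \<epsilon>_def using e by simp
    obtain n where n: "norm (sup_norm (\<lambda>i. avg T n x i - xh i) - 0) < \<epsilon>"
      using lim \<epsilon>0 unfolding LIMSEQ_iff by blast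
    have Dl: "(\<lambda>i. avg T n x i - xh i) \<in> linf"
      by (rule linf_minus[OF ds_linf[OF ds_avg[OF T] xl] xhl])
    have dxu: "(\<lambda>j. x j - u j) \<in> linf" by (rule linf_minus[OF xl ul])
    have sxu: "sup_norm (\<lambda>j. x j - u j) \<le> t" by (rule sup_norm_le) (use L(2) in auto)
    have u'l: "avg T n u \<in> l1" and u'n: "l1_norm (avg T n u) \<le> l1_norm u"
      using ds_l1[OF ds_avg[OF T] L(1)] by auto
    have close: "\<bar>xh i - avg T n u i\<bar> \<le> t + \<epsilon>" for i
    proof -
      have "\<bar>avg T n x i - xh i\<bar> \<le> sup_norm (\<lambda>i. avg T n x i - xh i)" by (rule sup_norm_ge[OF Dl])
      then have a1: "\<bar>avg T n x i - xh i\<bar> \<le> \<epsilon>" using n by simp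
      have a2: "\<bar>avg T n x i - avg T n u i\<bar> \<le> t"
        using avg_minus[OF T xl ul, of n i] avg_abs_le[OF T dxu, of n i] sxu by linarith
      show ?thesis using a1 a2 by linarith
    qed
    have "(\<Sum>i\<le>k. rearr xh i) \<le> real (Suc k) * (t + \<epsilon>) + l1_norm (avg T n u)"
      by (rule rearr_sum_upper[OF xh0 u'l close]) (use t0 \<epsilon>0 in simp)
    also have "\<dots> = real (Suc k) * t + e + l1_norm (avg T n u)"
      unfolding \<epsilon>_def by (simp add: distrib_left)
    also have "\<dots> \<le> (\<Sum>i\<le>k. rearr x i) + e" using u'n L(3) by linarith
    finally show "(\<Sum>i\<le>k. rearr xh i) \<le> (\<Sum>i\<le>k. rearr x i) + e" .
  qed
qed

theorem theorem1p1:
  fixes E :: "seq set" and N :: "seq \<Rightarrow> real" and T :: "seq \<Rightarrow> seq"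
  assumes "fully_symmetric E N"
    and "E \<noteq> linf"
    and "dunford_schwartz T"
  shows "\<forall>x\<in>E. \<exists>xh\<in>E.
           (\<lambda>n. sup_norm (\<lambda>i. (\<Sum>k<n. (T ^^ k) x i) / real n - xh i)) \<longlonglongrightarrow> 0"
proof
  fix x assume xE: "x \<in> E"
  have x0: "x \<longlonglongrightarrow> 0" by (rule E_c0[OF assms(1,2) xE])
  obtain xh where xh: "xh \<in> linf" "xh \<longlonglongrightarrow> 0" "(\<lambda>n. sup_norm (\<lambda>i. avg T n x i - xh i)) \<longlonglongrightarrow> 0"
    using conv_exists[OF assms(3) x0] by blast
  have "majorized xh x" by (rule major[OF assms(3) x0 xh(2,3)])
  then have "xh \<in> E" using assms(1) xE xh(1) unfolding fully_symmetric_def by blast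
  moreover have "(\<lambda>n. sup_norm (\<lambda>i. (\<Sum>k<n. (T ^^ k) x i) / real n - xh i)) \<longlonglongrightarrow> 0"
    using xh(3) unfolding avg_eq .
  ultimately show "\<exists>xh\<in>E. (\<lambda>n. sup_norm (\<lambda>i. (\<Sum>k<n. (T ^^ k) x i) / real n - xh i)) \<longlonglongrightarrow> 0" by blast
qed


end
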